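(* Let $\mathcal G$ be the complete graph on $m>1$ nodes (so $a_{ij}=1$ for all $i,j$, including self-loops) and let $\alpha\in(0,1)$. Then the function $\psi^\alpha(x)=\sum_{i=1}^m(\mu_ix_i)^\alpha$ is strictly concave on $\mathcal S_m$ and has a unique maximizer on $\mathcal S_m$, given by $$x_i^*=\frac{\mu_i^{\alpha/(1-\alpha)}}{\sum_{k=1}^m\mu_k^{\alpha/(1-\alpha)}},\quad 1\le i\le m,$$ and the iterates $x(n)$ of the choice process with this fixed $\alpha$ converge almost surely to $x^*$.
   Context: Rewards $\mu_i>0$, $\mathcal S_m$ is the unit simplex in $\mathbb R^m$. Process (with $\mathcal N(i)=\mathcal V$ for all $i$): observed rewards $\tilde\mu_i(n)=\mu_i+\zeta_i(n)$, where for each $i$, $\{\zeta_i(n)\}_{n\ge0}$ are i.i.d., zero mean, finite variance, with $\zeta(n+1)$ independent of the past. Choices $\xi(n)\in\{1,\dots,m\}$; $x(0)=(1/m,\dots,1/m)$, $x_i(n+1)=x_i(n)+\frac1{n+1}(\mathbb I\{\xi(n+1)=i\}-x_i(n))$. Empirical means $\hat\mu_i(n)=\frac{\sum_{k=0}^n\mathbb I\{\xi(k)=i\}\tilde\mu_i(k)}{\sum_{k=0}^n\mathbb I\{\xi(k)=i\}}$ (convention $0/0=0$). Exploration rates: $\varepsilon(0)\in(0,1]$, $\varepsilon(n+1)=(1-c(n))\varepsilon(n)$ with $0<c(n)\downarrow0$, $\sum_nc(n)=\infty$, $nc(n)\to0$, $\sum_n\varepsilon(n)^m=\infty$, $\sum_n\varepsilon(n)/(n+1)=\infty$,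 $\sqrt n\,\varepsilon(n)\to\infty$. Selection rule: $\mathbb P(\xi(n+1)=j\mid\mathcal F_n)=(1-\varepsilon(n))\frac{(\hat\mu_j(n)x_j(n))^\alpha}{\sum_l(\hat\mu_l(n)x_l(n))^\alpha}+\frac{\varepsilon(n)}m$, where $\mathcal F_n=\sigma(\xi(k),\zeta_i(k):k\le n,1\le i\le m)$. *)

theory Defs
  imports "HOL-Analysis.Analysis" "HOL-Probability.Probability"
begin

text \<open>Index set of arms/nodes: a finite type 'm with CARD('m) = m.\<close>

definition unit_simplex :: "(real^'m::finite) set" where
  "unit_simplex = {x. (\<forall>i. 0 \<le> x $ i) \<and> (\<Sum>i\<in>UNIV. x $ i) = 1}"

definition strict_concave_on :: "'a::real_vector set \<Rightarrow> ('a \<Rightarrow> real) \<Rightarrow> bool" where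
  "strict_concave_on S f \<longleftrightarrow> convex S \<and>
     (\<forall>x\<in>S. \<forall>y\<in>S. x \<noteq> y \<longrightarrow> (\<forall>t::real. 0 < t \<and> t < 1 \<longrightarrow>
        f ((1 - t) *\<^sub>R x + t *\<^sub>R y) > (1 - t) * f x + t * f y))"

definition psi :: "('m::finite \<Rightarrow> real) \<Rightarrow> real \<Rightarrow> real^'m \<Rightarrow> real" where
  "psi \<mu> \<alpha> x = (\<Sum>i\<in>UNIV. (\<mu> i * x $ i) powr \<alpha>)"

fun x_proc :: "(nat \<Rightarrow> 'a \<Rightarrow> 'm::finite) \<Rightarrow> nat \<Rightarrow> 'a \<Rightarrow> real^'m" where
  "x_proc \<xi> 0 \<omega> = (\<chi> i. 1 / real CARD('m))"
| "x_proc \<xi> (Suc n) \<omega> = (\<chi> i. x_proc \<xi> n \<omega> $ i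
      + (1 / real (Suc n)) * ((if \<xi> (Suc n) \<omega> = i then 1 else 0) - x_proc \<xi> n \<omega> $ i))"

text \<open>Empirical means (real division gives the convention 0/0 = 0).
  Noise is indexed as zeta i k omega.\<close>
definition mu_hat :: "('m \<Rightarrow> real) \<Rightarrow> ('m \<Rightarrow> nat \<Rightarrow> 'a \<Rightarrow> real) \<Rightarrow> (nat \<Rightarrow> 'a \<Rightarrow> 'm)
    \<Rightarrow> nat \<Rightarrow> 'a \<Rightarrow> 'm \<Rightarrow> real" where
  "mu_hat \<mu> \<zeta> \<xi> n \<omega> i =
     (\<Sum>k\<le>n. (if \<xi> k \<omega> = i then 1 else 0) * (\<mu> i + \<zeta> i k \<omega>))
     / (\<Sum>k\<le>n. (if \<xi> k \<omega> = i then 1 else 0))"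

text \<open>y^alpha for the weights; the paper's formula is only meaningful for y \<ge> 0,
  we use 0 for negative arguments.\<close>
definition wpow :: "real \<Rightarrow> real \<Rightarrow> real" where
  "wpow \<alpha> y = (if 0 < y then y powr \<alpha> else 0)"

definition sel_prob :: "real \<Rightarrow> ('m::finite \<Rightarrow> real) \<Rightarrow> ('m \<Rightarrow> nat \<Rightarrow> 'a \<Rightarrow> real)
    \<Rightarrow> (nat \<Rightarrow> 'a \<Rightarrow> 'm) \<Rightarrow> (nat \<Rightarrow> real) \<Rightarrow> nat \<Rightarrow> 'a \<Rightarrow> 'm \<Rightarrow> real" where
  "sel_prob \<alpha> \<mu> \<zeta> \<xi> \<epsilon> n \<omega> j =
     (let w = (\<lambda>l. wpow \<alpha> (mu_hat \<mu> \<zeta> \<xi> n \<omega> l * x_proc \<xi> n \<omega> $ l));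
          W = (\<Sum>l\<in>UNIV. w l)
      in (1 - \<epsilon> n) * (if W = 0 then 1 / real CARD('m) else w j / W) + \<epsilon> n / real CARD('m))"

definition past_events :: "'a measure \<Rightarrow> (nat \<Rightarrow> 'a \<Rightarrow> 'm) \<Rightarrow> ('m \<Rightarrow> nat \<Rightarrow> 'a \<Rightarrow> real)
    \<Rightarrow> nat \<Rightarrow> 'a set set" where
  "past_events M \<xi> \<zeta> n = sigma_sets (space M)
     ({\<xi> k -` A \<inter> space M | k A. k \<le> n} \<union>
      {\<zeta> i k -` B \<inter> space M | i k B. k \<le> n \<and> B \<in> sets borel})"

definition past_and_choice :: "'a measure \<Rightarrow> (nat \<Rightarrow> 'a \<Rightarrow> 'm) \<Rightarrow> ('m \<Rightarrow> nat \<Rightarrow> 'a \<Rightarrow> real)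
    \<Rightarrow> nat \<Rightarrow> 'a set set" where
  "past_and_choice M \<xi> \<zeta> n = sigma_sets (space M)
     ({\<xi> k -` A \<inter> space M | k A. k \<le> Suc n} \<union>
      {\<zeta> i k -` B \<inter> space M | i k B. k \<le> n \<and> B \<in> sets borel})"

definition noise_events :: "'a measure \<Rightarrow> ('m \<Rightarrow> nat \<Rightarrow> 'a \<Rightarrow> real) \<Rightarrow> nat \<Rightarrow> 'a set set" where
  "noise_events M \<zeta> n = sigma_sets (space M)
     {\<zeta> i n -` B \<inter> space M | i B. B \<in> sets borel}"

end

theory Submission
  imports Defs
begin


lemma young1:
  fixes t a :: real assumes "0 \<le> t" "0 < a" "a < 1"
  shows "t powr a \<le> 1 + a * (t - 1)"
proof (cases "t = 0")
  case True then show ?thesis using assms by simp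
next
  case False
  then have "t powr a * 1 powr (1 - a) \<le> a * t + (1 - a) * 1"
    using assms by (intro Youngs_inequality_0) auto
  then show ?thesis by (simp add: algebra_simps)
qed

lemma young_strict:
  fixes t a :: real assumes "0 \<le> t" "0 < a" "a < 1" "t \<noteq> 1"
  shows "t powr a < 1 + a * (t - 1)"
proof -
  define s where "s = (t + 1) / 2"
  have s0: "s > 0" using assms by (simp add: s_def)
  have "(t / s) powr a \<le> 1 + a * (t / s - 1)" using assms s0 by (intro young1) auto
  hence "s powr a * (t / s) powr a \<le> s powr a * (1 + a * (t / s - 1))"
    using s0 by (intro mult_left_mono) auto
  moreover have "s powr a * (t / s) powr a = t powr a"
    using s0 assms by (simp add: powr_mult[symmetric])
  moreover have "s powr a * (1 + a * (t / s - 1)) = s powr a + a * s powr (a - 1) * (t - s)"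
    using s0 by (simp add: powr_diff field_simps)
  ultimately have 1: "t powr a \<le> s powr a + a * s powr (a - 1) * (t - s)" by simp
  have 2: "s powr a \<le> 1 + a * (s - 1)" using s0 assms by (intro young1) auto
  have 3: "s powr (a - 1) * (t - s) < (t - s)"
  proof (cases "t > 1")
    case True
    then have "s > 1" by (simp add: s_def)
    then have "s powr (a - 1) < 1" using assms by (intro powr_less_one) auto
    moreover have "t - s > 0" using True by (simp add: s_def)
    ultimately show ?thesis by simp
  next
    case False
    then have t1: "t < 1" using assms by simp
    then have "s < 1" by (simp add: s_def)
    then have "s powr (a - 1) > 1" using assms s0
      by (metis diff_less_0_iff_less powr_less_mono2_neg powr_one_eq_one)
    moreover have "t - s < 0" using t1 by (simp add: s_def)
    ultimately show ?thesis by (simp add: mult_less_cancel_right)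
  qed
  have "a * (s powr (a - 1) * (t - s)) < a * (t - s)" using 3 assms by simp
  have 4: "1 + a * (s - 1) + a * (t - s) = 1 + a * (t - 1)" by (simp add: algebra_simps)
  have "a * s powr (a - 1) * (t - s) < a * (t - s)" using 3 assms by (simp add: mult.assoc)
  with 1 2 4 show ?thesis by linarith
qed



lemma conc_pow_strict:
  fixes u v t a :: real
  assumes "0 \<le> u" "0 \<le> v" "u \<noteq> v" "0 < t" "t < 1" "0 < a" "a < 1"
  shows "(1 - t) * u powr a + t * v powr a < ((1 - t) * u + t * v) powr a"
proof -
  define w where "w = (1 - t) * u + t * v"
  have w0: "w > 0"
  proof (cases "u = 0")
    case True
    then have "v > 0" using assms by auto
    then show ?thesis using True assms unfolding w_def by simp
  next
    case False
    then have "(1 - t) * u > 0" using assms by simp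
    moreover have "t * v \<ge> 0" using assms by simp
    ultimately show ?thesis unfolding w_def by linarith
  qed
  have wu: "w - u = t * (v - u)" unfolding w_def by (simp add: algebra_simps)
  have wv: "w - v = (1 - t) * (u - v)" unfolding w_def by (simp add: algebra_simps)
  have uw: "u \<noteq> w" using wu assms by auto
  have vw: "v \<noteq> w" using wv assms by auto
  have eu: "u powr a = w powr a * (u / w) powr a" using w0 assms
    by (simp add: powr_mult[symmetric])
  have ev: "v powr a = w powr a * (v / w) powr a" using w0 assms
    by (simp add: powr_mult[symmetric])
  have pu: "(u / w) powr a < 1 + a * (u / w - 1)"
    using assms w0 uw by (intro young_strict) (auto simp: field_simps)
  have pv: "(v / w) powr a < 1 + a * (v / w - 1)"
    using assms w0 vw by (intro young_strict) (auto simp: field_simps)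
  have wp: "w powr a > 0" using w0 by simp
  have "(1 - t) * u powr a + t * v powr a
        = w powr a * ((1 - t) * (u / w) powr a + t * (v / w) powr a)"
    by (simp add: eu ev algebra_simps)
  also have "\<dots> < w powr a * ((1 - t) * (1 + a * (u / w - 1)) + t * (1 + a * (v / w - 1)))"
  proof -
    have "(1 - t) * (u / w) powr a < (1 - t) * (1 + a * (u / w - 1))"
      using pu assms by simp
    moreover have "t * (v / w) powr a < t * (1 + a * (v / w - 1))"
      using pv assms by simp
    ultimately show ?thesis using wp by (intro mult_strict_left_mono) auto
  qed
  also have "(1 - t) * (1 + a * (u / w - 1)) + t * (1 + a * (v / w - 1)) = 1"
  proof -
    have "(1 - t) * (1 + a * (u / w - 1)) + t * (1 + a * (v / w - 1))
          = 1 + a * (((1 - t) * u + t * v) / w - 1)"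
      using w0 by (simp add: field_simps)
    also have "\<dots> = 1" using w0 by (simp add: w_def[symmetric])
    finally show ?thesis .
  qed
  finally show ?thesis by (simp add: w_def)
qed

lemma convex_unit_simplex: "convex (unit_simplex :: (real^'m::finite) set)"
  unfolding convex_def unit_simplex_def
  by (auto simp: sum.distrib sum_distrib_left[symmetric])

lemma psi_strict_concave:
  fixes \<mu> :: "'m::finite \<Rightarrow> real"
  assumes mu: "\<And>i. \<mu> i > 0" and a: "0 < a" "a < 1"
  shows "strict_concave_on unit_simplex (psi \<mu> a)"
  unfolding strict_concave_on_def
proof (intro conjI convex_unit_simplex ballI allI impI)
  fix x y :: "real^'m" and t :: real
  assume x: "x \<in> unit_simplex" and y: "y \<in> unit_simplex" and xy: "x \<noteq> y" and t: "0 < t \<and> t < 1"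
  have x0: "\<And>i. x $ i \<ge> 0" and y0: "\<And>i. y $ i \<ge> 0" using x y by (auto simp: unit_simplex_def)
  obtain k where k: "x $ k \<noteq> y $ k" using xy by (metis vec_eq_iff)
  have key: "(1 - t) * (\<mu> i * x $ i) powr a + t * (\<mu> i * y $ i) powr a
        \<le> (\<mu> i * ((1 - t) * x $ i + t * y $ i)) powr a" for i
  proof (cases "x $ i = y $ i")
    case True then show ?thesis by (simp add: algebra_simps)
  next
    case False
    have "(1 - t) * (\<mu> i * x $ i) powr a + t * (\<mu> i * y $ i) powr a
        = \<mu> i powr a * ((1 - t) * x $ i powr a + t * y $ i powr a)"
      using mu[of i] x0[of i] y0[of i] by (simp add: powr_mult algebra_simps)
    also have "\<dots> \<le> \<mu> i powr a * (((1 - t) * x $ i + t * y $ i) powr a)"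
    proof -
      have "(1 - t) * x $ i powr a + t * y $ i powr a < ((1 - t) * x $ i + t * y $ i) powr a"
        by (rule conc_pow_strict) (use x0 y0 False t a in auto)
      then show ?thesis by (intro mult_left_mono) auto
    qed
    also have "\<dots> = (\<mu> i * ((1 - t) * x $ i + t * y $ i)) powr a"
      using mu[of i] x0[of i] y0[of i] t by (simp add: powr_mult)
    finally show ?thesis .
  qed
  have keys: "(1 - t) * (\<mu> k * x $ k) powr a + t * (\<mu> k * y $ k) powr a
        < (\<mu> k * ((1 - t) * x $ k + t * y $ k)) powr a"
  proof -
    have "(1 - t) * (\<mu> k * x $ k) powr a + t * (\<mu> k * y $ k) powr a
        = \<mu> k powr a * ((1 - t) * x $ k powr a + t * y $ k powr a)"
      using mu[of k] x0[of k] y0[of k] by (simp add: powr_mult algebra_simps)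
    also have "\<dots> < \<mu> k powr a * (((1 - t) * x $ k + t * y $ k) powr a)"
    proof -
      have "(1 - t) * x $ k powr a + t * y $ k powr a < ((1 - t) * x $ k + t * y $ k) powr a"
        by (rule conc_pow_strict) (use x0 y0 k t a in auto)
      then show ?thesis using mu[of k] by (intro mult_strict_left_mono) auto
    qed
    also have "\<dots> = (\<mu> k * ((1 - t) * x $ k + t * y $ k)) powr a"
      using mu[of k] x0[of k] y0[of k] t by (simp add: powr_mult)
    finally show ?thesis .
  qed
  have "(1 - t) * psi \<mu> a x + t * psi \<mu> a y
      = (\<Sum>i\<in>UNIV. (1 - t) * (\<mu> i * x $ i) powr a + t * (\<mu> i * y $ i) powr a)"
    unfolding psi_def by (simp add: sum.distrib sum_distrib_left)
  also have "\<dots> < (\<Sum>i\<in>UNIV. (\<mu> i * ((1 - t) * x $ i + t * y $ i)) powr a)"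
    by (rule sum_strict_mono_ex1) (use key keys in auto)
  also have "\<dots> = psi \<mu> a ((1 - t) *\<^sub>R x + t *\<^sub>R y)"
    unfolding psi_def by simp
  finally show "(1 - t) * psi \<mu> a x + t * psi \<mu> a y < psi \<mu> a ((1 - t) *\<^sub>R x + t *\<^sub>R y)" .
qed



definition xstar :: "('m::finite \<Rightarrow> real) \<Rightarrow> real \<Rightarrow> real^'m" where
  "xstar \<mu> a = (\<chi> i. \<mu> i powr (a / (1 - a)) / (\<Sum>k\<in>UNIV. \<mu> k powr (a / (1 - a))))"

definition sstar :: "('m::finite \<Rightarrow> real) \<Rightarrow> real \<Rightarrow> real" where
  "sstar \<mu> a = (\<Sum>k\<in>UNIV. \<mu> k powr (a / (1 - a)))"

context
  fixes \<mu> :: "'m::finite \<Rightarrow> real" and a :: real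
  assumes mu: "\<And>i. \<mu> i > 0" and a: "0 < a" "a < 1"
begin

lemma sstar_pos: "sstar \<mu> a > 0"
  unfolding sstar_def using mu by (intro sum_pos) (auto simp: less_imp_neq[OF mu, symmetric])

lemma xstar_pos: "xstar \<mu> a $ i > 0"
proof -
  have "\<mu> i powr (a / (1 - a)) > 0" using mu[of i] by simp
  then show ?thesis unfolding xstar_def using sstar_pos by (simp add: sstar_def)
qed

lemma xstar_simplex: "xstar \<mu> a \<in> unit_simplex"
  unfolding unit_simplex_def
proof safe
  show "0 \<le> xstar \<mu> a $ i" for i using xstar_pos[of i] by simp
  show "(\<Sum>i\<in>UNIV. xstar \<mu> a $ i) = 1"
    unfolding xstar_def using sstar_pos by (simp add: sum_divide_distrib[symmetric] sstar_def)
qed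

lemma mu_pow_eq:
  assumes "0 \<le> y"
  shows "(\<mu> i * y) powr a = sstar \<mu> a powr (1 - a) * (xstar \<mu> a $ i powr (1 - a) * y powr a)"
proof -
  have s: "sstar \<mu> a > 0" by (rule sstar_pos)
  have "xstar \<mu> a $ i powr (1 - a) = (\<mu> i powr (a / (1 - a))) powr (1 - a) / sstar \<mu> a powr (1 - a)"
    unfolding xstar_def sstar_def[symmetric] using s mu[of i] by (simp add: powr_divide)
  also have "(\<mu> i powr (a / (1 - a))) powr (1 - a) = \<mu> i powr a"
    using a by (simp add: powr_powr)
  finally have "sstar \<mu> a powr (1 - a) * xstar \<mu> a $ i powr (1 - a) = \<mu> i powr a"
    using s by simp
  then show ?thesis using assms mu[of i] by (simp add: powr_mult mult.assoc[symmetric])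
qed

lemma young_pair:
  assumes "0 \<le> y"
  shows "xstar \<mu> a $ i powr (1 - a) * y powr a \<le> (1 - a) * xstar \<mu> a $ i + a * y"
    and "y \<noteq> xstar \<mu> a $ i \<Longrightarrow> xstar \<mu> a $ i powr (1 - a) * y powr a < (1 - a) * xstar \<mu> a $ i + a * y"
proof -
  define z where "z = xstar \<mu> a $ i"
  have z: "z > 0" using xstar_pos unfolding z_def by simp
  have eq: "z powr (1 - a) * y powr a = z * (y / z) powr a"
    using z assms by (simp add: powr_divide powr_diff field_simps)
  have eq2: "z * (1 + a * (y / z - 1)) = (1 - a) * z + a * y"
    using z by (simp add: field_simps)
  have "(y / z) powr a \<le> 1 + a * (y / z - 1)" using z assms a by (intro young1) auto
  then have "z * (y / z) powr a \<le> z * (1 + a * (y / z - 1))" using z by simp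
  then show "xstar \<mu> a $ i powr (1 - a) * y powr a \<le> (1 - a) * xstar \<mu> a $ i + a * y"
    using eq eq2 unfolding z_def by simp
  assume ne: "y \<noteq> xstar \<mu> a $ i"
  have "(y / z) powr a < 1 + a * (y / z - 1)" using z assms a ne unfolding z_def[symmetric]
    by (intro young_strict) auto
  then have "z * (y / z) powr a < z * (1 + a * (y / z - 1))" using z by simp
  then show "xstar \<mu> a $ i powr (1 - a) * y powr a < (1 - a) * xstar \<mu> a $ i + a * y"
    using eq eq2 unfolding z_def by simp
qed

lemma sum_young_le:
  assumes "y \<in> unit_simplex"
  shows "(\<Sum>i\<in>UNIV. xstar \<mu> a $ i powr (1 - a) * y $ i powr a) \<le> 1"
proof -
  have y0: "\<And>i. y $ i \<ge> 0" and y1: "(\<Sum>i\<in>UNIV. y $ i) = 1" using assms by (auto simp: unit_simplex_def)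
  have x1: "(\<Sum>i\<in>UNIV. xstar \<mu> a $ i) = 1" using xstar_simplex by (auto simp: unit_simplex_def)
  have "(\<Sum>i\<in>UNIV. xstar \<mu> a $ i powr (1 - a) * y $ i powr a)
      \<le> (\<Sum>i\<in>UNIV. (1 - a) * xstar \<mu> a $ i + a * y $ i)"
    by (intro sum_mono young_pair(1) y0)
  also have "\<dots> = 1" using x1 y1 by (simp add: sum.distrib sum_distrib_left[symmetric])
  finally show ?thesis .
qed

lemma psi_eq:
  assumes "y \<in> unit_simplex"
  shows "psi \<mu> a y = sstar \<mu> a powr (1 - a) * (\<Sum>i\<in>UNIV. xstar \<mu> a $ i powr (1 - a) * y $ i powr a)"
  using assms unfolding psi_def by (simp add: mu_pow_eq unit_simplex_def sum_distrib_left)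

lemma psi_max:
  assumes "y \<in> unit_simplex" "y \<noteq> xstar \<mu> a"
  shows "psi \<mu> a y < psi \<mu> a (xstar \<mu> a)"
proof -
  have y0: "\<And>i. y $ i \<ge> 0" and y1: "(\<Sum>i\<in>UNIV. y $ i) = 1" using assms by (auto simp: unit_simplex_def)
  have x1: "(\<Sum>i\<in>UNIV. xstar \<mu> a $ i) = 1" using xstar_simplex by (auto simp: unit_simplex_def)
  obtain k where k: "y $ k \<noteq> xstar \<mu> a $ k" using assms(2) by (metis vec_eq_iff)
  have "(\<Sum>i\<in>UNIV. xstar \<mu> a $ i powr (1 - a) * y $ i powr a)
      < (\<Sum>i\<in>UNIV. (1 - a) * xstar \<mu> a $ i + a * y $ i)"
    by (rule sum_strict_mono_ex1) (use young_pair(1)[OF y0] young_pair(2)[OF y0 k] in auto)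
  also have "\<dots> = 1" using x1 y1 by (simp add: sum.distrib sum_distrib_left[symmetric])
  finally have lt: "(\<Sum>i\<in>UNIV. xstar \<mu> a $ i powr (1 - a) * y $ i powr a) < 1" .
  have "(\<Sum>i\<in>UNIV. xstar \<mu> a $ i powr (1 - a) * xstar \<mu> a $ i powr a) = 1"
  proof -
    have "xstar \<mu> a $ i powr (1 - a) * xstar \<mu> a $ i powr a = xstar \<mu> a $ i" for i
      using xstar_pos[of i] by (simp add: powr_add[symmetric])
    then show ?thesis using x1 by simp
  qed
  then have "psi \<mu> a (xstar \<mu> a) = sstar \<mu> a powr (1 - a)"
    using psi_eq[OF xstar_simplex] by simp
  moreover have "psi \<mu> a y < sstar \<mu> a powr (1 - a)"
    using psi_eq[OF assms(1)] lt sstar_pos by simp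
  ultimately show ?thesis by simp
qed

end


lemma L2_mult:
  fixes f g :: "'a \<Rightarrow> real"
  assumes [measurable]: "f \<in> borel_measurable M" "g \<in> borel_measurable M"
    and "integrable M (\<lambda>x. (f x)\<^sup>2)" "integrable M (\<lambda>x. (g x)\<^sup>2)"
  shows "integrable M (\<lambda>x. f x * g x)"
proof -
  have i: "integrable M (\<lambda>x. (f x)\<^sup>2 + (g x)\<^sup>2)" using assms by simp
  have b: "\<bar>f x * g x\<bar> \<le> (f x)\<^sup>2 + (g x)\<^sup>2" for x
  proof -
    have "0 \<le> (\<bar>f x\<bar> - \<bar>g x\<bar>)\<^sup>2" by simp
    then have "2 * (\<bar>f x\<bar> * \<bar>g x\<bar>) \<le> (f x)\<^sup>2 + (g x)\<^sup>2"
      by (simp add: power2_eq_square algebra_simps)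
    moreover have "0 \<le> \<bar>f x\<bar> * \<bar>g x\<bar>" by simp
    ultimately have "\<bar>f x\<bar> * \<bar>g x\<bar> \<le> (f x)\<^sup>2 + (g x)\<^sup>2" by linarith
    then show ?thesis by (simp add: abs_mult)
  qed
  show ?thesis
    by (rule Bochner_Integration.integrable_bound[OF i]) (use b in auto)
qed

lemma L2_add:
  fixes f g :: "'a \<Rightarrow> real"
  assumes [measurable]: "f \<in> borel_measurable M" "g \<in> borel_measurable M"
    and "integrable M (\<lambda>x. (f x)\<^sup>2)" "integrable M (\<lambda>x. (g x)\<^sup>2)"
  shows "integrable M (\<lambda>x. (f x + g x)\<^sup>2)"
proof -
  have "integrable M (\<lambda>x. (f x)\<^sup>2 + 2 * (f x * g x) + (g x)\<^sup>2)"
    using assms L2_mult[OF assms] by simp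
  moreover have "(\<lambda>x. (f x + g x)\<^sup>2) = (\<lambda>x. (f x)\<^sup>2 + 2 * (f x * g x) + (g x)\<^sup>2)"
    by (rule ext) (simp add: power2_eq_square algebra_simps)
  ultimately show ?thesis by simp
qed

lemma L2_sum:
  fixes f :: "'i \<Rightarrow> 'a \<Rightarrow> real"
  assumes "finite I" "\<And>i. i \<in> I \<Longrightarrow> f i \<in> borel_measurable M"
    "\<And>i. i \<in> I \<Longrightarrow> integrable M (\<lambda>x. (f i x)\<^sup>2)"
  shows "integrable M (\<lambda>x. (\<Sum>i\<in>I. f i x)\<^sup>2)"
  using assms
proof (induction I rule: finite_induct)
  case empty then show ?case by simp
next
  case (insert j I)
  have m: "(\<lambda>x. \<Sum>i\<in>I. f i x) \<in> borel_measurable M" using insert by auto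
  have "integrable M (\<lambda>x. (f j x + (\<Sum>i\<in>I. f i x))\<^sup>2)"
    by (rule L2_add) (use insert m in auto)
  then show ?case using insert by simp
qed

locale mg_setup = prob_space M for M :: "'a measure" +
  fixes F :: "nat \<Rightarrow> 'a measure" and d :: "nat \<Rightarrow> 'a \<Rightarrow> real"
  assumes subalg: "\<And>i. subalgebra M (F i)"
    and Fmono: "\<And>i j. i \<le> j \<Longrightarrow> sets (F i) \<subseteq> sets (F j)"
    and d_meas: "\<And>i j. j < i \<Longrightarrow> d j \<in> borel_measurable (F i)"
    and d_M: "\<And>i. d i \<in> borel_measurable M"
    and d_sq: "\<And>i. integrable M (\<lambda>\<omega>. (d i \<omega>)\<^sup>2)"
    and orth: "\<And>i g. g \<in> borel_measurable (F i) \<Longrightarrow> integrable M (\<lambda>\<omega>. (g \<omega>)\<^sup>2)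
                 \<Longrightarrow> (\<integral>\<omega>. g \<omega> * d i \<omega> \<partial>M) = 0"
begin

lemma space_F: "space (F i) = space M"
  using subalg[of i] by (simp add: subalgebra_def)

lemma meas_F_mono:
  assumes "f \<in> borel_measurable (F i)" "i \<le> j"
  shows "f \<in> borel_measurable (F j)"
proof (rule measurable_from_subalg[OF _ assms(1)])
  show "subalgebra (F j) (F i)"
    unfolding subalgebra_def using space_F Fmono[OF assms(2)] by simp
qed

lemma meas_F_M: "f \<in> borel_measurable (F i) \<Longrightarrow> f \<in> borel_measurable M"
  by (rule measurable_from_subalg[OF subalg])

definition Y :: "nat \<Rightarrow> nat \<Rightarrow> 'a \<Rightarrow> real" where
  "Y n k \<omega> = (\<Sum>i\<in>{n..<n+k}. d i \<omega>)"

lemma Y_meas: "l \<le> k \<Longrightarrow> Y n l \<in> borel_measurable (F (n + k))"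
  unfolding Y_def
  by (intro borel_measurable_sum d_meas) auto

lemma Y_M: "Y n l \<in> borel_measurable M"
  using meas_F_M[OF Y_meas[of l l n]] by simp

lemma Y_sq: "integrable M (\<lambda>\<omega>. (Y n k \<omega>)\<^sup>2)"
  unfolding Y_def by (rule L2_sum) (auto intro: d_M d_sq)

lemma Y_orth: "(\<integral>\<omega>. (Y n k \<omega>)\<^sup>2 \<partial>M) = (\<Sum>i\<in>{n..<n+k}. \<integral>\<omega>. (d i \<omega>)\<^sup>2 \<partial>M)"
proof (induction k)
  case 0 then show ?case by (simp add: Y_def)
next
  case (Suc k)
  have YS: "Y n (Suc k) \<omega> = Y n k \<omega> + d (n + k) \<omega>" for \<omega>
    unfolding Y_def by simp
  have i1: "integrable M (\<lambda>\<omega>. Y n k \<omega> * d (n + k) \<omega>)"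
    by (rule L2_mult) (use Y_M d_M Y_sq d_sq in auto)
  have o: "(\<integral>\<omega>. Y n k \<omega> * d (n + k) \<omega> \<partial>M) = 0"
    by (rule orth[OF Y_meas[of k k n] Y_sq]) simp
  have "(\<integral>\<omega>. (Y n (Suc k) \<omega>)\<^sup>2 \<partial>M)
      = (\<integral>\<omega>. (Y n k \<omega>)\<^sup>2 + 2 * (Y n k \<omega> * d (n + k) \<omega>) + (d (n + k) \<omega>)\<^sup>2 \<partial>M)"
    unfolding YS by (intro Bochner_Integration.integral_cong) (simp_all add: power2_eq_square algebra_simps)
  also have "\<dots> = (\<integral>\<omega>. (Y n k \<omega>)\<^sup>2 \<partial>M) + 2 * (\<integral>\<omega>. Y n k \<omega> * d (n + k) \<omega> \<partial>M)
                 + (\<integral>\<omega>. (d (n + k) \<omega>)\<^sup>2 \<partial>M)"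
    using i1 Y_sq d_sq by simp
  also have "\<dots> = (\<Sum>i\<in>{n..<n+Suc k}. \<integral>\<omega>. (d i \<omega>)\<^sup>2 \<partial>M)"
    using Suc o by simp
  finally show ?case .
qed

lemma Y_split: "k \<le> L \<Longrightarrow> Y n L \<omega> = Y n k \<omega> + (\<Sum>i\<in>{n+k..<n+L}. d i \<omega>)"
  unfolding Y_def by (metis add_le_cancel_left le_add1 sum.atLeastLessThan_concat)

lemma maximal:
  assumes lam: "lam > 0"
  shows "measure M {\<omega>\<in>space M. \<exists>k\<le>L. lam \<le> \<bar>Y n k \<omega>\<bar>}
         \<le> (\<Sum>i\<in>{n..<n+L}. \<integral>\<omega>. (d i \<omega>)\<^sup>2 \<partial>M) / lam\<^sup>2"
proof -
  define A where "A k = {\<omega>\<in>space M. lam \<le> \<bar>Y n k \<omega>\<bar> \<and> (\<forall>l\<in>{..<k}. \<bar>Y n l \<omega>\<bar> < lam)}" for k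
  define B where "B = {\<omega>\<in>space M. \<exists>k\<le>L. lam \<le> \<bar>Y n k \<omega>\<bar>}"
  have A_F: "A k \<in> sets (F (n + k))" for k
  proof -
    have [measurable]: "Y n l \<in> borel_measurable (F (n + k))" if "l \<le> k" for l
      using Y_meas that by simp
    have "A k = {\<omega>\<in>space (F (n + k)). lam \<le> \<bar>Y n k \<omega>\<bar> \<and> (\<forall>l\<in>{..<k}. \<bar>Y n l \<omega>\<bar> < lam)}"
      unfolding A_def space_F by simp
    also have "\<dots> \<in> sets (F (n + k))"
      by (intro sets.sets_Collect_conj sets.sets_Collect_finite_All) (auto intro: less_imp_le)
    finally show ?thesis .
  qed
  have A_M: "A k \<in> sets M" for k
    using A_F[of k] subalg[of "n + k"] by (auto simp: subalgebra_def)
  define g where "g k \<omega> = indicator (A k) \<omega> * Y n k \<omega>" for k \<omega>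
  have g_F: "g k \<in> borel_measurable (F (n + k))" for k
    unfolding g_def using A_F[of k] Y_meas[of k k n] by (intro borel_measurable_times) auto
  have g_M: "g k \<in> borel_measurable M" for k using meas_F_M[OF g_F] .
  have g_sq: "integrable M (\<lambda>\<omega>. (g k \<omega>)\<^sup>2)" for k
  proof (rule Bochner_Integration.integrable_bound[OF Y_sq[of n k]])
    show "(\<lambda>\<omega>. (g k \<omega>)\<^sup>2) \<in> borel_measurable M" using g_M by simp
    show "AE \<omega> in M. norm ((g k \<omega>)\<^sup>2) \<le> norm ((Y n k \<omega>)\<^sup>2)"
      by (intro AE_I2) (simp add: g_def indicator_def)
  qed
  have indY: "integrable M (\<lambda>\<omega>. indicator (A k) \<omega> * (Y n m \<omega>)\<^sup>2)" for k m
  proof (rule Bochner_Integration.integrable_bound[OF Y_sq[of n m]])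
    show "(\<lambda>\<omega>. indicator (A k) \<omega> * (Y n m \<omega>)\<^sup>2) \<in> borel_measurable M"
      using A_M[of k] Y_M[of n m] by measurable
    show "AE \<omega> in M. norm (indicator (A k) \<omega> * (Y n m \<omega>)\<^sup>2) \<le> norm ((Y n m \<omega>)\<^sup>2)"
      by (intro AE_I2) (simp add: indicator_def)
  qed
  have key1: "(\<integral>\<omega>. indicator (A k) \<omega> * (Y n k \<omega>)\<^sup>2 \<partial>M)
      \<le> (\<integral>\<omega>. indicator (A k) \<omega> * (Y n L \<omega>)\<^sup>2 \<partial>M)" if kL: "k \<le> L" for k
  proof -
    define R where "R \<omega> = (\<Sum>i\<in>{n+k..<n+L}. d i \<omega>)" for \<omega>
    have gd: "integrable M (\<lambda>\<omega>. g k \<omega> * d i \<omega>)" for i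
      by (rule L2_mult) (use g_M d_M g_sq d_sq in auto)
    have gR0: "(\<integral>\<omega>. g k \<omega> * R \<omega> \<partial>M) = 0"
    proof -
      have "(\<integral>\<omega>. g k \<omega> * R \<omega> \<partial>M) = (\<integral>\<omega>. (\<Sum>i\<in>{n+k..<n+L}. g k \<omega> * d i \<omega>) \<partial>M)"
        unfolding R_def by (simp add: sum_distrib_left)
      also have "\<dots> = (\<Sum>i\<in>{n+k..<n+L}. \<integral>\<omega>. g k \<omega> * d i \<omega> \<partial>M)"
        by (rule Bochner_Integration.integral_sum) (use gd in auto)
      also have "\<dots> = 0"
      proof (intro sum.neutral ballI)
        fix i assume "i \<in> {n+k..<n+L}"
        then have "g k \<in> borel_measurable (F i)" using meas_F_mono[OF g_F[of k]] by auto
        then show "(\<integral>\<omega>. g k \<omega> * d i \<omega> \<partial>M) = 0" using orth g_sq by blast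
      qed
      finally show ?thesis .
    qed
    have gRi: "integrable M (\<lambda>\<omega>. g k \<omega> * R \<omega>)"
      unfolding R_def by (simp add: sum_distrib_left gd)
    have pw: "indicator (A k) \<omega> * (Y n k \<omega>)\<^sup>2 + 2 * (g k \<omega> * R \<omega>)
              \<le> indicator (A k) \<omega> * (Y n L \<omega>)\<^sup>2" for \<omega>
    proof -
      have "Y n L \<omega> = Y n k \<omega> + R \<omega>" using Y_split[OF kL] unfolding R_def by simp
      then have "(Y n L \<omega>)\<^sup>2 = (Y n k \<omega>)\<^sup>2 + 2 * (Y n k \<omega> * R \<omega>) + (R \<omega>)\<^sup>2"
        by (simp add: power2_eq_square algebra_simps)
      then show ?thesis unfolding g_def by (simp add: indicator_def)
    qed
    have "(\<integral>\<omega>. indicator (A k) \<omega> * (Y n k \<omega>)\<^sup>2 \<partial>M)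
        = (\<integral>\<omega>. indicator (A k) \<omega> * (Y n k \<omega>)\<^sup>2 + 2 * (g k \<omega> * R \<omega>) \<partial>M)"
      using indY gRi gR0 by simp
    also have "\<dots> \<le> (\<integral>\<omega>. indicator (A k) \<omega> * (Y n L \<omega>)\<^sup>2 \<partial>M)"
      by (intro integral_mono) (use indY gRi pw in auto)
    finally show ?thesis .
  qed
  have B_M: "B \<in> sets M"
  proof -
    have [measurable]: "Y n l \<in> borel_measurable M" for l using Y_M .
    show ?thesis unfolding B_def by measurable
  qed
  have pw2: "lam\<^sup>2 * indicator B \<omega> \<le> (\<Sum>k\<in>{..L}. indicator (A k) \<omega> * (Y n k \<omega>)\<^sup>2)" for \<omega>
  proof (cases "\<omega> \<in> B")
    case False then show ?thesis by (simp add: sum_nonneg)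
  next
    case True
    then have om: "\<omega> \<in> space M" and ex: "\<exists>k\<le>L. lam \<le> \<bar>Y n k \<omega>\<bar>" by (auto simp: B_def)
    define k0 where "k0 = (LEAST k. lam \<le> \<bar>Y n k \<omega>\<bar>)"
    have k0: "lam \<le> \<bar>Y n k0 \<omega>\<bar>" unfolding k0_def using ex by (metis LeastI)
    have k0L: "k0 \<le> L" unfolding k0_def using ex by (meson Least_le order_trans)
    have k0min: "\<forall>l\<in>{..<k0}. \<bar>Y n l \<omega>\<bar> < lam" unfolding k0_def using not_less_Least by force
    have inA: "\<omega> \<in> A k0" unfolding A_def using om k0 k0min by simp
    have "lam\<^sup>2 \<le> (Y n k0 \<omega>)\<^sup>2" using k0 lam
      by (metis abs_ge_zero abs_of_pos power2_abs power_mono)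
    also have "\<dots> = indicator (A k0) \<omega> * (Y n k0 \<omega>)\<^sup>2" using inA by simp
    also have "\<dots> \<le> (\<Sum>k\<in>{..L}. indicator (A k) \<omega> * (Y n k \<omega>)\<^sup>2)"
      by (rule member_le_sum) (use k0L in auto)
    finally show ?thesis using True by simp
  qed
  have sum_ind: "(\<Sum>k\<in>{..L}. indicator (A k) \<omega>) \<le> (1::real)" for \<omega>
  proof (cases "\<exists>k\<le>L. \<omega> \<in> A k")
    case False then show ?thesis by (simp add: indicator_def)
  next
    case True
    then obtain k0 where k0: "k0 \<le> L" "\<omega> \<in> A k0" by auto
    have other: "\<omega> \<notin> A k" if "k \<noteq> k0" for k
    proof
      assume "\<omega> \<in> A k"
      with k0(2) that show False unfolding A_def
      proof (cases "k < k0")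
        case False
        then have "k0 < k" using that by simp
        then show ?thesis using \<open>\<omega> \<in> A k\<close> k0(2) unfolding A_def by force
      next
        case True
        then show ?thesis using \<open>\<omega> \<in> A k\<close> k0(2) unfolding A_def by force
      qed
    qed
    have "(\<Sum>k\<in>{..L}. indicator (A k) \<omega>) = (indicator (A k0) \<omega> :: real)
          + (\<Sum>k\<in>{..L} - {k0}. indicator (A k) \<omega>)"
      using k0 by (intro sum.remove) auto
    also have "(\<Sum>k\<in>{..L} - {k0}. indicator (A k) \<omega> :: real) = 0"
      using other by (intro sum.neutral) auto
    finally show ?thesis by (simp add: indicator_def)
  qed
  have "lam\<^sup>2 * measure M B = (\<integral>\<omega>. lam\<^sup>2 * indicator B \<omega> \<partial>M)"
    using B_M by simp
  also have "\<dots> \<le> (\<integral>\<omega>. (\<Sum>k\<in>{..L}. indicator (A k) \<omega> * (Y n k \<omega>)\<^sup>2) \<partial>M)"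
  proof (rule integral_mono)
    show "integrable M (\<lambda>\<omega>. lam\<^sup>2 * indicator B \<omega>)"
      using B_M by (intro integrable_mult_right integrable_real_indicator) (auto simp: less_top[symmetric])
    show "integrable M (\<lambda>\<omega>. \<Sum>k\<in>{..L}. indicator (A k) \<omega> * (Y n k \<omega>)\<^sup>2)"
      by (rule Bochner_Integration.integrable_sum) (use indY in auto)
  qed (rule pw2)
  also have "\<dots> = (\<Sum>k\<in>{..L}. \<integral>\<omega>. indicator (A k) \<omega> * (Y n k \<omega>)\<^sup>2 \<partial>M)"
    by (rule Bochner_Integration.integral_sum) (use indY in auto)
  also have "\<dots> \<le> (\<Sum>k\<in>{..L}. \<integral>\<omega>. indicator (A k) \<omega> * (Y n L \<omega>)\<^sup>2 \<partial>M)"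
    by (intro sum_mono key1) auto
  also have "\<dots> = (\<integral>\<omega>. (\<Sum>k\<in>{..L}. indicator (A k) \<omega>) * (Y n L \<omega>)\<^sup>2 \<partial>M)"
    by (subst Bochner_Integration.integral_sum[symmetric]) (use indY in \<open>auto simp: sum_distrib_right\<close>)
  also have "\<dots> \<le> (\<integral>\<omega>. (Y n L \<omega>)\<^sup>2 \<partial>M)"
  proof (intro integral_mono)
    show "integrable M (\<lambda>\<omega>. (\<Sum>k\<in>{..L}. indicator (A k) \<omega>) * (Y n L \<omega>)\<^sup>2)"
      unfolding sum_distrib_right by (rule Bochner_Integration.integrable_sum) (use indY in auto)
    show "(\<Sum>k\<in>{..L}. indicator (A k) \<omega>) * (Y n L \<omega>)\<^sup>2 \<le> (Y n L \<omega>)\<^sup>2" for \<omega>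
      using sum_ind[of \<omega>] by (simp add: mult_left_le_one_le sum_nonneg)
  qed (rule Y_sq)
  also have "\<dots> = (\<Sum>i\<in>{n..<n+L}. \<integral>\<omega>. (d i \<omega>)\<^sup>2 \<partial>M)" by (rule Y_orth)
  finally have "lam\<^sup>2 * measure M B \<le> (\<Sum>i\<in>{n..<n+L}. \<integral>\<omega>. (d i \<omega>)\<^sup>2 \<partial>M)" .
  then show ?thesis using lam unfolding B_def[symmetric] by (simp add: field_simps)
qed

lemma mg_converges:
  assumes summ: "summable (\<lambda>i. \<integral>\<omega>. (d i \<omega>)\<^sup>2 \<partial>M)"
  shows "AE \<omega> in M. convergent (\<lambda>n. \<Sum>i<n. d i \<omega>)"
proof -
  define f where "f i = (\<integral>\<omega>. (d i \<omega>)\<^sup>2 \<partial>M)" for i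
  have f0: "f i \<ge> 0" for i unfolding f_def by simp
  define T where "T n = (\<Sum>i. f (i + n))" for n
  have T_lim: "T \<longlonglongrightarrow> 0"
  proof -
    have eqn: "T n = suminf f - (\<Sum>i<n. f i)" for n
    proof -
      have sf: "summable f" using summ unfolding f_def .
      show ?thesis unfolding T_def using suminf_minus_initial_segment[OF sf, of n] by simp
    qed
    moreover have "(\<lambda>n. suminf f - (\<Sum>i<n. f i)) \<longlonglongrightarrow> suminf f - suminf f"
      using summ unfolding f_def[symmetric] by (intro tendsto_diff tendsto_const summable_LIMSEQ)
    moreover have "T = (\<lambda>n. suminf f - (\<Sum>i<n. f i))" using eqn by (intro ext)
    ultimately show ?thesis by simp
  qed
  have Y_M'[measurable]: "Y n l \<in> borel_measurable M" for n l using Y_M .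
  define E where "E r n = {\<omega>\<in>space M. \<exists>k. 1 / (real r + 1) \<le> \<bar>Y n k \<omega>\<bar>}" for r n
  have E_M[measurable]: "E r n \<in> sets M" for r n unfolding E_def by measurable
  have E_bound: "measure M (E r n) \<le> T n * (real r + 1)\<^sup>2" for r n
  proof -
    define B where "B L = {\<omega>\<in>space M. \<exists>k\<le>L. 1 / (real r + 1) \<le> \<bar>Y n k \<omega>\<bar>}" for L
    have B_M: "B L \<in> sets M" for L unfolding B_def by measurable
    have inc: "incseq B" unfolding incseq_def B_def by (auto intro: order_trans)
    have U: "(\<Union>L. B L) = E r n" unfolding B_def E_def by auto
    have lim: "(\<lambda>L. measure M (B L)) \<longlonglongrightarrow> measure M (E r n)"
      unfolding U[symmetric] by (rule finite_Lim_measure_incseq) (use B_M inc in auto)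
    have bd: "measure M (B L) \<le> T n * (real r + 1)\<^sup>2" for L
    proof -
      have lp: "(1 / (real r + 1)) > 0" by simp
      have m1: "measure M (B L) \<le> (\<Sum>i\<in>{n..<n+L}. f i) / (1 / (real r + 1))\<^sup>2"
        unfolding B_def f_def by (rule maximal[OF lp])
      have "(\<Sum>i\<in>{n..<n+L}. f i) = (\<Sum>i<L. f (i + n))"
        by (rule sum.reindex_bij_witness[of _ "\<lambda>i. i + n" "\<lambda>i. i - n"]) auto
      also have "\<dots> \<le> T n"
      proof -
        have sf: "summable f" using summ unfolding f_def .
        show ?thesis unfolding T_def
          by (rule sum_le_suminf) (use summable_ignore_initial_segment[OF sf] f0 in auto)
      qed
      finally have m2: "(\<Sum>i\<in>{n..<n+L}. f i) \<le> T n" .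
      have "(\<Sum>i\<in>{n..<n+L}. f i) / (1 / (real r + 1))\<^sup>2 = (\<Sum>i\<in>{n..<n+L}. f i) * (real r + 1)\<^sup>2"
        by (simp add: field_simps)
      also have "\<dots> \<le> T n * (real r + 1)\<^sup>2" using m2 by (intro mult_right_mono) auto
      finally show ?thesis using m1 by simp
    qed
    show ?thesis using lim bd by (intro LIMSEQ_le_const2) auto
  qed
  define N where "N r = (\<Inter>n. E r n)" for r
  have N_null: "N r \<in> null_sets M" for r
  proof -
    have NM: "N r \<in> sets M" unfolding N_def using E_M by auto
    have "measure M (N r) \<le> T n * (real r + 1)\<^sup>2" for n
    proof -
      have "measure M (N r) \<le> measure M (E r n)"
        by (intro finite_measure_mono) (auto simp: N_def)
      then show ?thesis using E_bound[of r n] by simp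
    qed
    moreover have "(\<lambda>n. T n * (real r + 1)\<^sup>2) \<longlonglongrightarrow> 0 * (real r + 1)\<^sup>2"
      by (intro tendsto_mult T_lim tendsto_const)
    ultimately have "measure M (N r) \<le> 0"
      by (intro LIMSEQ_le_const[of "\<lambda>n. T n * (real r + 1)\<^sup>2" 0]) auto
    then have "measure M (N r) = 0" by (simp add: measure_le_0_iff)
    then show ?thesis using NM by (simp add: emeasure_eq_measure null_setsI)
  qed
  have null: "(\<Union>r. N r) \<in> null_sets M" using N_null by auto
  show ?thesis
  proof (rule AE_I'[OF null], safe)
    fix \<omega> assume om: "\<omega> \<in> space M" and nc: "\<not> convergent (\<lambda>n. \<Sum>i<n. d i \<omega>)"
    show "\<omega> \<in> (\<Union>r. N r)"
    proof (rule ccontr)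
      assume "\<omega> \<notin> (\<Union>r. N r)"
      then have good: "\<forall>r. \<exists>n. \<forall>k. \<bar>Y n k \<omega>\<bar> < 1 / (real r + 1)"
        using om unfolding N_def E_def by (auto simp: not_le)
      have "Cauchy (\<lambda>n. \<Sum>i<n. d i \<omega>)"
      proof (rule CauchyI)
        fix e :: real assume e: "e > 0"
        obtain r :: nat where r: "inverse (real (Suc r)) < e / 2"
          using ex_inverse_of_nat_less[of "e/2"] e by (auto simp: gr0_conv_Suc)
        obtain n where n: "\<And>k. \<bar>Y n k \<omega>\<bar> < 1 / (real r + 1)" using good by blast
        have S: "(\<Sum>i<p. d i \<omega>) = (\<Sum>i<n. d i \<omega>) + Y n (p - n) \<omega>" if "p \<ge> n" for p
          unfolding Y_def using that
          by (metis add_diff_inverse_nat not_less sum.atLeastLessThan_concat atLeast0LessThan le0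
              le_add_diff_inverse)
        show "\<exists>M. \<forall>m\<ge>M. \<forall>p\<ge>M. norm ((\<Sum>i<m. d i \<omega>) - (\<Sum>i<p. d i \<omega>)) < e"
        proof (intro exI allI impI)
          fix m p assume m: "n \<le> m" and p: "n \<le> p"
          have "\<bar>Y n (m - n) \<omega>\<bar> < e / 2" "\<bar>Y n (p - n) \<omega>\<bar> < e / 2"
            using n[of "m - n"] n[of "p - n"] r by (auto simp: inverse_eq_divide add.commute)
          then show "norm ((\<Sum>i<m. d i \<omega>) - (\<Sum>i<p. d i \<omega>)) < e"
            using S[OF m] S[OF p] by (simp add: abs_diff_less_iff) linarith
        qed
      qed
      then show False using nc Cauchy_convergent_iff by blast
    qed
  qed
qed

end


lemma ind_meas:
  assumes "f \<in> measurable N (count_space UNIV)"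
  shows "(\<lambda>\<omega>. if f \<omega> = i then (1::real) else 0) \<in> borel_measurable N"
proof -
  have "(\<lambda>z. if z = i then (1::real) else 0) \<in> borel_measurable (count_space UNIV)" by simp
  from measurable_compose[OF assms this] show ?thesis by (simp add: comp_def)
qed

lemma x_proc_meas:
  assumes "\<And>k. k \<le> n \<Longrightarrow> \<xi> k \<in> measurable N (count_space UNIV)"
  shows "(\<lambda>\<omega>. x_proc \<xi> n \<omega> $ i) \<in> borel_measurable N"
  using assms
proof (induction n arbitrary: i)
  case 0 then show ?case by simp
next
  case (Suc n)
  have h: "(\<lambda>\<omega>. x_proc \<xi> n \<omega> $ l) \<in> borel_measurable N" for l using Suc by auto
  have g: "(\<lambda>\<omega>. if \<xi> (Suc n) \<omega> = i then (1::real) else 0) \<in> borel_measurable N"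
    using Suc.prems by (intro ind_meas) auto
  show ?case using h g by simp
qed

lemma mu_hat_meas:
  assumes "\<And>k. k \<le> n \<Longrightarrow> \<xi> k \<in> measurable N (count_space UNIV)"
    and "\<And>k l. k \<le> n \<Longrightarrow> \<zeta> l k \<in> borel_measurable N"
  shows "(\<lambda>\<omega>. mu_hat \<mu> \<zeta> \<xi> n \<omega> l) \<in> borel_measurable N"
proof -
  have g: "(\<lambda>\<omega>. if \<xi> k \<omega> = l then (1::real) else 0) \<in> borel_measurable N" if "k \<le> n" for k
    using assms that by (intro ind_meas) auto
  have z: "\<zeta> l k \<in> borel_measurable N" if "k \<le> n" for k using assms that by auto
  show ?thesis unfolding mu_hat_def
    by (intro borel_measurable_divide borel_measurable_sum borel_measurable_times borel_measurable_add)
       (use g z in auto)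
qed

lemma wpow_meas: "wpow a \<in> borel_measurable borel"
proof -
  have "(\<lambda>y. if 0 < y then y powr a else 0) \<in> borel_measurable borel" by measurable
  then show ?thesis unfolding wpow_def[abs_def] .
qed

lemma sel_prob_meas:
  assumes "\<And>k. k \<le> n \<Longrightarrow> \<xi> k \<in> measurable N (count_space UNIV)"
    and "\<And>k l. k \<le> n \<Longrightarrow> \<zeta> l k \<in> borel_measurable N"
  shows "(\<lambda>\<omega>. sel_prob \<alpha> \<mu> \<zeta> \<xi> \<epsilon> n \<omega> j) \<in> borel_measurable N"
proof -
  have w: "(\<lambda>\<omega>. wpow \<alpha> (mu_hat \<mu> \<zeta> \<xi> n \<omega> l * x_proc \<xi> n \<omega> $ l)) \<in> borel_measurable N" for l
    using measurable_compose[OF borel_measurable_times[OF mu_hat_meas[OF assms] x_proc_meas[OF assms(1)]] wpow_meas]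
    by (simp add: comp_def)
  have W: "(\<lambda>\<omega>. \<Sum>l\<in>UNIV. wpow \<alpha> (mu_hat \<mu> \<zeta> \<xi> n \<omega> l * x_proc \<xi> n \<omega> $ l)) \<in> borel_measurable N"
    using w by (intro borel_measurable_sum) auto
  have P: "Measurable.pred N (\<lambda>\<omega>. (\<Sum>l\<in>UNIV. wpow \<alpha> (mu_hat \<mu> \<zeta> \<xi> n \<omega> l * x_proc \<xi> n \<omega> $ l)) = 0)"
    using W by measurable
  have I: "(\<lambda>\<omega>. if (\<Sum>l\<in>UNIV. wpow \<alpha> (mu_hat \<mu> \<zeta> \<xi> n \<omega> l * x_proc \<xi> n \<omega> $ l)) = 0
          then 1 / real CARD('b)
          else wpow \<alpha> (mu_hat \<mu> \<zeta> \<xi> n \<omega> j * x_proc \<xi> n \<omega> $ j) /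
               (\<Sum>l\<in>UNIV. wpow \<alpha> (mu_hat \<mu> \<zeta> \<xi> n \<omega> l * x_proc \<xi> n \<omega> $ l))) \<in> borel_measurable N"
    by (rule measurable_If[OF _ _ P[unfolded pred_def]]) (use w W in auto)
  show ?thesis unfolding sel_prob_def Let_def
    by (intro borel_measurable_add borel_measurable_times borel_measurable_const I)
qed

definition qsel :: "real \<Rightarrow> ('m::finite \<Rightarrow> real) \<Rightarrow> ('m \<Rightarrow> nat \<Rightarrow> 'a \<Rightarrow> real)
    \<Rightarrow> (nat \<Rightarrow> 'a \<Rightarrow> 'm) \<Rightarrow> nat \<Rightarrow> 'a \<Rightarrow> 'm \<Rightarrow> real" where
  "qsel \<alpha> \<mu> \<zeta> \<xi> n \<omega> j =
     (let w = (\<lambda>l. wpow \<alpha> (mu_hat \<mu> \<zeta> \<xi> n \<omega> l * x_proc \<xi> n \<omega> $ l));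
          W = (\<Sum>l\<in>UNIV. w l)
      in (if W = 0 then 1 / real CARD('m) else w j / W))"

lemma sel_prob_q: "sel_prob \<alpha> (\<mu> :: 'm::finite \<Rightarrow> real) \<zeta> \<xi> \<epsilon> n \<omega> j = (1 - \<epsilon> n) * qsel \<alpha> \<mu> \<zeta> \<xi> n \<omega> j + \<epsilon> n / real CARD('m)"
  unfolding sel_prob_def qsel_def Let_def by simp

lemma qsel_bounds:
  shows "0 \<le> qsel \<alpha> (\<mu> :: 'm::finite \<Rightarrow> real) \<zeta> \<xi> n \<omega> j" and "qsel \<alpha> \<mu> \<zeta> \<xi> n \<omega> j \<le> 1"
proof -
  define w where "w l = wpow \<alpha> (mu_hat \<mu> \<zeta> \<xi> n \<omega> l * x_proc \<xi> n \<omega> $ l)" for l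
  have w0: "w l \<ge> 0" for l unfolding w_def wpow_def by simp
  have wj: "w j \<le> (\<Sum>l\<in>UNIV. w l)" by (rule member_le_sum) (use w0 in auto)
  have q: "qsel \<alpha> \<mu> \<zeta> \<xi> n \<omega> j = (if (\<Sum>l\<in>UNIV. w l) = 0 then 1 / real CARD('m) else w j / (\<Sum>l\<in>UNIV. w l))"
    unfolding qsel_def w_def Let_def by simp
  have c: "real CARD('m) \<ge> 1" by (simp add: Suc_le_eq)
  show "0 \<le> qsel \<alpha> \<mu> \<zeta> \<xi> n \<omega> j" unfolding q using w0 by (simp add: sum_nonneg)
  show "qsel \<alpha> \<mu> \<zeta> \<xi> n \<omega> j \<le> 1" unfolding q using w0 wj c sum_nonneg[of UNIV w] by (auto simp: divide_le_eq_1)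
qed

lemma sel_prob_abs: "\<bar>sel_prob \<alpha> (\<mu> :: 'm::finite \<Rightarrow> real) \<zeta> \<xi> \<epsilon> n \<omega> j\<bar> \<le> 1 + 2 * \<bar>\<epsilon> n\<bar>"
proof -
  define q where "q = qsel \<alpha> \<mu> \<zeta> \<xi> n \<omega> j"
  have q: "0 \<le> q" "q \<le> 1" unfolding q_def by (rule qsel_bounds)+
  have c: "real CARD('m) \<ge> 1" by (simp add: Suc_le_eq)
  have "\<bar>(1 - \<epsilon> n) * q\<bar> = \<bar>1 - \<epsilon> n\<bar> * q" using q by (simp add: abs_mult)
  also have "\<dots> \<le> \<bar>1 - \<epsilon> n\<bar>" using q by (simp add: mult_left_le)
  moreover have "\<bar>1 - \<epsilon> n\<bar> \<le> 1 + \<bar>\<epsilon> n\<bar>" by arith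
  ultimately have a1: "\<bar>(1 - \<epsilon> n) * q\<bar> \<le> 1 + \<bar>\<epsilon> n\<bar>" by linarith
  have "\<bar>\<epsilon> n / real CARD('m)\<bar> = \<bar>\<epsilon> n\<bar> / real CARD('m)" by simp
  also have "\<dots> \<le> \<bar>\<epsilon> n\<bar> / 1" using c by (intro divide_left_mono) auto
  finally have a2: "\<bar>\<epsilon> n / real CARD('m)\<bar> \<le> \<bar>\<epsilon> n\<bar>" by simp
  have "sel_prob \<alpha> \<mu> \<zeta> \<xi> \<epsilon> n \<omega> j = (1 - \<epsilon> n) * q + \<epsilon> n / real CARD('m)"
    unfolding q_def by (rule sel_prob_q)
  then show ?thesis using a1 a2 by linarith
qed



locale setting = prob_space M for M :: "'a measure" +
  fixes \<mu> :: "'m::finite \<Rightarrow> real" and \<alpha> :: real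
    and \<zeta> :: "'m \<Rightarrow> nat \<Rightarrow> 'a \<Rightarrow> real" and \<xi> :: "nat \<Rightarrow> 'a \<Rightarrow> 'm"
    and \<epsilon> c :: "nat \<Rightarrow> real"
  assumes m_gt1: "CARD('m) > 1"
    and mu_pos: "\<And>i. \<mu> i > 0"
    and alpha: "0 < \<alpha>" "\<alpha> < 1"
    and xi_meas: "\<And>n. \<xi> n \<in> measurable M (count_space UNIV)"
    and zeta_meas: "\<And>i n. \<zeta> i n \<in> borel_measurable M"
    and zeta_mean: "\<And>i n. integrable M (\<zeta> i n) \<and> integral\<^sup>L M (\<zeta> i n) = 0"
    and zeta_var: "\<And>i n. integrable M (\<lambda>\<omega>. (\<zeta> i n \<omega>)\<^sup>2)"
    and zeta_iid: "\<And>i. prob_space.indep_vars M (\<lambda>_. borel) (\<zeta> i) UNIV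
                       \<and> (\<forall>n. distr M borel (\<zeta> i n) = distr M borel (\<zeta> i 0))"
    and zeta_indep_past: "\<And>n. prob_space.indep_set M
              (past_and_choice M \<xi> \<zeta> n) (noise_events M \<zeta> (Suc n))"
    and eps0: "0 < \<epsilon> 0" "\<epsilon> 0 \<le> 1"
    and eps_rec: "\<And>n. \<epsilon> (Suc n) = (1 - c n) * \<epsilon> n"
    and c_pos: "\<And>n. 0 < c n"
    and c_dec: "decseq c"
    and c_lim: "c \<longlonglongrightarrow> 0"
    and c_nsum: "\<not> summable c"
    and eps_n_nsum: "\<not> summable (\<lambda>n. \<epsilon> n / (real n + 1))"
    and sqrt_eps: "filterlim (\<lambda>n. sqrt (real n) * \<epsilon> n) at_top sequentially"
    and selection: "\<And>n j A. A \<in> past_events M \<xi> \<zeta> n \<Longrightarrow>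
          measure M (A \<inter> {\<omega> \<in> space M. \<xi> (Suc n) \<omega> = j})
          = (\<integral>\<omega>. indicator A \<omega> * sel_prob \<alpha> \<mu> \<zeta> \<xi> \<epsilon> n \<omega> j \<partial>M)"
begin

definition gen_past :: "nat \<Rightarrow> 'a set set" where
  "gen_past n = ({\<xi> k -` A \<inter> space M | k A. k \<le> n} \<union>
      {\<zeta> i k -` B \<inter> space M | i k B. k \<le> n \<and> B \<in> sets borel})"

definition FP :: "nat \<Rightarrow> 'a measure" where
  "FP n = sigma (space M) (gen_past n)"

lemma gen_past_sets: "gen_past n \<subseteq> sets M"
proof -
  have "\<xi> k -` A \<inter> space M \<in> sets M" for k A
    using measurable_sets[OF xi_meas[of k], of A] by simp
  moreover have "B \<in> sets borel \<Longrightarrow> \<zeta> i k -` B \<inter> space M \<in> sets M" for i k B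
    using measurable_sets[OF zeta_meas[of i k]] by simp
  ultimately show ?thesis unfolding gen_past_def by blast
qed

lemma gen_past_pow: "gen_past n \<subseteq> Pow (space M)"
  unfolding gen_past_def by blast

lemma space_FP[simp]: "space (FP n) = space M"
  unfolding FP_def by (simp add: space_measure_of_conv)

lemma sets_FP: "sets (FP n) = sigma_sets (space M) (gen_past n)"
  unfolding FP_def using gen_past_pow by (simp add: sets_measure_of)

lemma sets_FP_past: "sets (FP n) = past_events M \<xi> \<zeta> n"
  unfolding sets_FP past_events_def gen_past_def ..

lemma subalg_FP: "subalgebra M (FP n)"
  unfolding subalgebra_def using gen_past_sets
  by (simp add: sets_FP sets.sigma_sets_subset)

lemma FP_mono: "i \<le> j \<Longrightarrow> sets (FP i) \<subseteq> sets (FP j)"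
proof -
  assume ij: "i \<le> j"
  have "gen_past i \<subseteq> gen_past j"
    unfolding gen_past_def using ij by (blast intro: le_trans)
  then show ?thesis unfolding sets_FP by (rule sigma_sets_mono')
qed

lemma xi_FP: "k \<le> n \<Longrightarrow> \<xi> k \<in> measurable (FP n) (count_space UNIV)"
proof (rule measurableI)
  fix A :: "'m set" assume "k \<le> n" "A \<in> sets (count_space UNIV)"
  then have "\<xi> k -` A \<inter> space M \<in> gen_past n" unfolding gen_past_def by blast
  then show "\<xi> k -` A \<inter> space (FP n) \<in> sets (FP n)" unfolding sets_FP by auto
qed auto

lemma zeta_FP: "k \<le> n \<Longrightarrow> \<zeta> i k \<in> borel_measurable (FP n)"
proof (rule measurableI)
  fix B :: "real set" assume "k \<le> n" "B \<in> sets borel"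
  then have "\<zeta> i k -` B \<inter> space M \<in> gen_past n" unfolding gen_past_def by blast
  then show "\<zeta> i k -` B \<inter> space (FP n) \<in> sets (FP n)" unfolding sets_FP by auto
qed auto

abbreviation p :: "nat \<Rightarrow> 'm \<Rightarrow> 'a \<Rightarrow> real" where
  "p n j \<omega> \<equiv> sel_prob \<alpha> \<mu> \<zeta> \<xi> \<epsilon> n \<omega> j"

definition I :: "nat \<Rightarrow> 'm \<Rightarrow> 'a \<Rightarrow> real" where
  "I k j \<omega> = (if \<xi> k \<omega> = j then 1 else 0)"

lemma p_FP: "(\<lambda>\<omega>. p n j \<omega>) \<in> borel_measurable (FP n)"
  by (rule sel_prob_meas) (auto intro: xi_FP zeta_FP)

lemma I_FP: "k \<le> n \<Longrightarrow> I k j \<in> borel_measurable (FP n)"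
  unfolding I_def by (rule ind_meas[OF xi_FP])

lemma I_M: "I k j \<in> borel_measurable M"
  unfolding I_def by (rule ind_meas[OF xi_meas])

lemma p_M: "(\<lambda>\<omega>. p n j \<omega>) \<in> borel_measurable M"
  by (rule measurable_from_subalg[OF subalg_FP p_FP])

lemma I_bound: "\<bar>I k j \<omega>\<bar> \<le> 1" unfolding I_def by simp

lemma I_sq: "integrable M (\<lambda>\<omega>. (I k j \<omega>)\<^sup>2)"
proof -
  have m: "(\<lambda>\<omega>. (I k j \<omega>)\<^sup>2) \<in> borel_measurable M" using I_M by simp
  show ?thesis by (rule integrable_const_bound[where B=1, OF _ m]) (auto simp: I_def)
qed

lemma p_sq: "integrable M (\<lambda>\<omega>. (p n j \<omega>)\<^sup>2)"
proof (rule integrable_const_bound[where B="(1 + 2 * \<bar>\<epsilon> n\<bar>)\<^sup>2"])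
  show "AE x in M. norm ((p n j x)\<^sup>2) \<le> (1 + 2 * \<bar>\<epsilon> n\<bar>)\<^sup>2"
  proof (intro AE_I2)
    fix x
    have "\<bar>p n j x\<bar> \<le> 1 + 2 * \<bar>\<epsilon> n\<bar>" by (rule sel_prob_abs)
    then have "\<bar>p n j x\<bar>\<^sup>2 \<le> (1 + 2 * \<bar>\<epsilon> n\<bar>)\<^sup>2" by (intro power_mono) auto
    then show "norm ((p n j x)\<^sup>2) \<le> (1 + 2 * \<bar>\<epsilon> n\<bar>)\<^sup>2" by simp
  qed
qed (use p_M in simp)

lemma p_int: "integrable M (\<lambda>\<omega>. p n j \<omega>)"
  by (rule integrable_const_bound[where B="1 + 2 * \<bar>\<epsilon> n\<bar>"]) (auto intro: p_M sel_prob_abs)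

lemma I_int: "integrable M (I k j)"
  by (rule integrable_const_bound[where B=1, OF _ I_M]) (auto simp: I_def)

lemma sel_orth:
  assumes g: "g \<in> borel_measurable (FP n)" and g2: "integrable M (\<lambda>\<omega>. (g \<omega>)\<^sup>2)"
  shows "(\<integral>\<omega>. g \<omega> * (I (Suc n) j \<omega> - p n j \<omega>) \<partial>M) = 0"
proof -
  have fms: "finite_measure_subalgebra M (FP n)"
    unfolding finite_measure_subalgebra_def finite_measure_subalgebra_axioms_def
    using subalg_FP finite_measure_axioms by auto
  interpret sigma_finite_subalgebra M "FP n"
    by (rule finite_measure_subalgebra_is_sigma_finite[OF fms])
  have gM: "g \<in> borel_measurable M" by (rule measurable_from_subalg[OF subalg_FP g])
  have AEc: "AE x in M. real_cond_exp M (FP n) (I (Suc n) j) x = p n j x"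
  proof (rule real_cond_exp_charact)
    fix A assume A: "A \<in> sets (FP n)"
    then have AM: "A \<in> sets M" using subalg_FP by (auto simp: subalgebra_def)
    have Ap: "A \<in> past_events M \<xi> \<zeta> n" using A sets_FP_past by simp
    have "(\<integral>x\<in>A. I (Suc n) j x \<partial>M) = (\<integral>x. indicator (A \<inter> {\<omega> \<in> space M. \<xi> (Suc n) \<omega> = j}) x \<partial>M)"
      unfolding set_lebesgue_integral_def
      by (intro Bochner_Integration.integral_cong) (auto simp: I_def indicator_def)
    also have "\<dots> = measure M (A \<inter> {\<omega> \<in> space M. \<xi> (Suc n) \<omega> = j})"
      by (simp add: Int_absorb2 Int_assoc)
    also have "\<dots> = (\<integral>\<omega>. indicator A \<omega> * p n j \<omega> \<partial>M)" by (rule selection[OF Ap])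
    also have "\<dots> = (\<integral>x\<in>A. p n j x \<partial>M)" unfolding set_lebesgue_integral_def by simp
    finally show "(\<integral>x\<in>A. I (Suc n) j x \<partial>M) = (\<integral>x\<in>A. p n j x \<partial>M)" .
  qed (auto intro: I_int p_int p_FP)
  have iI: "integrable M (\<lambda>x. g x * I (Suc n) j x)"
    by (rule L2_mult) (use gM I_M g2 I_sq in auto)
  have ip: "integrable M (\<lambda>x. g x * p n j x)"
    by (rule L2_mult) (use gM p_M g2 p_sq in auto)
  have "(\<integral>x. g x * I (Suc n) j x \<partial>M) = (\<integral>x. g x * real_cond_exp M (FP n) (I (Suc n) j) x \<partial>M)"
    by (rule real_cond_exp_intg(2)[symmetric]) (use iI g I_M in auto)
  also have "\<dots> = (\<integral>x. g x * p n j x \<partial>M)"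
    by (rule integral_cong_AE) (use AEc gM p_M in auto)
  finally have eq: "(\<integral>x. g x * I (Suc n) j x \<partial>M) = (\<integral>x. g x * p n j x \<partial>M)" .
  have "(\<integral>\<omega>. g \<omega> * (I (Suc n) j \<omega> - p n j \<omega>) \<partial>M)
      = (\<integral>x. g x * I (Suc n) j x \<partial>M) - (\<integral>x. g x * p n j x \<partial>M)"
    using iI ip by (simp add: right_diff_distrib)
  then show ?thesis using eq by simp
qed

end


lemma nonsum_unbounded:
  fixes f :: "nat \<Rightarrow> real"
  assumes ns: "\<not> summable f" and nn: "\<And>n. n \<ge> N \<Longrightarrow> f n \<ge> 0"
  shows "\<exists>k. (\<Sum>i<k. f (i + N)) > Z"
proof (rule ccontr)
  assume "\<not> ?thesis"
  then have b: "(\<Sum>i<k. f (i + N)) \<le> Z" for k by (simp add: not_less)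
  have "summable (\<lambda>i. f (i + N))"
    by (rule summableI_nonneg_bounded[OF _ b]) (use nn in auto)
  then show False using ns by simp
qed

lemma partial_mono:
  fixes f :: "nat \<Rightarrow> real"
  assumes nn: "\<And>n. n \<ge> N \<Longrightarrow> f n \<ge> 0" and "k \<le> k'"
  shows "(\<Sum>i<k. f (i + N)) \<le> (\<Sum>i<k'. f (i + N))"
  by (rule sum_mono2) (use assms in auto)

context setting
begin

lemma c_ev: "eventually (\<lambda>n. c n < 1) sequentially"
  using c_lim by (rule order_tendstoD) simp

lemma eps_ev_pos: "eventually (\<lambda>n. \<epsilon> n > 0) sequentially"
proof -
  have "eventually (\<lambda>n. sqrt (real n) * \<epsilon> n > 0) sequentially"
    using sqrt_eps by (simp add: filterlim_at_top_dense)
  then show ?thesis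
    by (rule eventually_mono) (auto simp: zero_less_mult_iff)
qed

lemma eps_base: obtains N where "\<epsilon> N > 0" "\<And>n. n \<ge> N \<Longrightarrow> c n < 1"
proof -
  obtain N1 where N1: "\<And>n. n \<ge> N1 \<Longrightarrow> c n < 1" using c_ev by (auto simp: eventually_sequentially)
  obtain N2 where N2: "\<And>n. n \<ge> N2 \<Longrightarrow> \<epsilon> n > 0" using eps_ev_pos by (auto simp: eventually_sequentially)
  show ?thesis
  proof (rule that[of "max N1 N2"])
    show "\<epsilon> (max N1 N2) > 0" using N2 by simp
    show "c n < 1" if "n \<ge> max N1 N2" for n using N1 that by simp
  qed
qed

lemma eps_lim: "\<epsilon> \<longlonglongrightarrow> 0"
proof -
  obtain N where eN: "\<epsilon> N > 0" and cN: "\<And>n. n \<ge> N \<Longrightarrow> c n < 1" using eps_base by metis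
  define S where "S k = (\<Sum>i<k. c (i + N))" for k
  have pos: "\<epsilon> (k + N) > 0" for k
  proof (induction k)
    case 0 then show ?case using eN by simp
  next
    case (Suc k)
    have "1 - c (k + N) > 0" using cN[of "k + N"] by simp
    then show ?case using Suc eps_rec[of "k + N"] by simp
  qed
  have bd: "\<epsilon> (k + N) \<le> \<epsilon> N * exp (- S k)" for k
  proof (induction k)
    case 0 then show ?case by (simp add: S_def)
  next
    case (Suc k)
    have "\<epsilon> (Suc k + N) = (1 - c (k + N)) * \<epsilon> (k + N)" using eps_rec[of "k + N"] by simp
    also have "\<dots> \<le> exp (- c (k + N)) * \<epsilon> (k + N)"
      using pos[of k] exp_ge_add_one_self[of "- c (k + N)"] by (intro mult_right_mono) auto
    also have "\<dots> \<le> exp (- c (k + N)) * (\<epsilon> N * exp (- S k))"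
      using Suc by (intro mult_left_mono) auto
    also have "\<dots> = \<epsilon> N * exp (- S (Suc k))"
      by (simp add: S_def exp_add[symmetric] algebra_simps)
    finally show ?case .
  qed
  have "(\<lambda>k. \<epsilon> (k + N)) \<longlonglongrightarrow> 0"
  proof (rule LIMSEQ_I)
    fix r :: real assume r: "r > 0"
    obtain k0 where k0: "S k0 > ln (\<epsilon> N / r)"
      using nonsum_unbounded[OF c_nsum, of N "ln (\<epsilon> N / r)"] c_pos less_imp_le
      unfolding S_def by blast
    show "\<exists>no. \<forall>k\<ge>no. norm (\<epsilon> (k + N) - 0) < r"
    proof (intro exI allI impI)
      fix k assume k: "k \<ge> k0"
      have "S k0 \<le> S k" unfolding S_def by (rule partial_mono) (use c_pos less_imp_le k in auto)
      then have "exp (- S k) < exp (- ln (\<epsilon> N / r))" using k0 by simp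
      also have "\<dots> = r / \<epsilon> N" using eN r by (simp add: exp_minus)
      finally have "\<epsilon> N * exp (- S k) < \<epsilon> N * (r / \<epsilon> N)" using eN by (intro mult_strict_left_mono) auto
      then have "\<epsilon> N * exp (- S k) < r" using eN by simp
      then have "\<epsilon> (k + N) < r" using bd[of k] eN by simp
      then show "norm (\<epsilon> (k + N) - 0) < r" using pos[of k] by simp
    qed
  qed
  then show ?thesis by (rule LIMSEQ_offset)
qed

lemma eps_bounded: obtains E where "\<And>n. \<bar>\<epsilon> n\<bar> \<le> E"
proof -
  have "Bseq \<epsilon>" using eps_lim by (rule convergent_imp_Bseq[OF convergentI])
  then obtain K where "\<And>n. norm (\<epsilon> n) \<le> K" by (auto simp: Bseq_def)
  then show ?thesis using that by auto
qed

end


lemma summable_inv_sq: "summable (\<lambda>n. K * (1 / (real n + 1)\<^sup>2))"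
proof -
  have "summable (\<lambda>n::nat. 1 / (real n + 1)\<^sup>2)"
    using inverse_squares_sums by (simp add: sums_iff add.commute)
  then show ?thesis by (rule summable_mult)
qed

context setting
begin

lemma FP_transfer: "f \<in> borel_measurable (FP i) \<Longrightarrow> i \<le> k \<Longrightarrow> f \<in> borel_measurable (FP k)"
  by (rule measurable_from_subalg[of "FP k" "FP i"]) (auto simp: subalgebra_def FP_mono)

lemma S_conv: "AE \<omega> in M. convergent (\<lambda>n. \<Sum>i<n. (I (Suc i) j \<omega> - p i j \<omega>) / (real i + 1))"
proof -
  obtain E where E: "\<And>n. \<bar>\<epsilon> n\<bar> \<le> E" using eps_bounded by metis
  define d where "d i \<omega> = (I (Suc i) j \<omega> - p i j \<omega>) / (real i + 1)" for i \<omega>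
  have dM: "d i \<in> borel_measurable M" for i unfolding d_def using I_M p_M by simp
  have dbd: "\<bar>d i \<omega>\<bar> \<le> (2 + 2 * E) / (real i + 1)" for i \<omega>
  proof -
    have "\<bar>I (Suc i) j \<omega> - p i j \<omega>\<bar> \<le> 2 + 2 * E"
      using I_bound[of "Suc i" j \<omega>] sel_prob_abs[of \<alpha> \<mu> \<zeta> \<xi> \<epsilon> i \<omega> j] E[of i] by linarith
    then show ?thesis unfolding d_def by (simp add: divide_right_mono)
  qed
  have dsq_bd: "(d i \<omega>)\<^sup>2 \<le> (2 + 2 * E)\<^sup>2 * (1 / (real i + 1)\<^sup>2)" for i \<omega>
  proof -
    have "(d i \<omega>)\<^sup>2 = \<bar>d i \<omega>\<bar>\<^sup>2" by simp
    also have "\<dots> \<le> ((2 + 2 * E) / (real i + 1))\<^sup>2" using dbd[of i \<omega>] by (intro power_mono) auto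
    finally show ?thesis by (simp add: power_divide)
  qed
  have dsq: "integrable M (\<lambda>\<omega>. (d i \<omega>)\<^sup>2)" for i
  proof -
    have m: "(\<lambda>\<omega>. (d i \<omega>)\<^sup>2) \<in> borel_measurable M" using dM by simp
    show ?thesis by (rule integrable_const_bound[OF _ m]) (use dsq_bd in auto)
  qed
  interpret mg: mg_setup M FP d
  proof
    show "subalgebra M (FP i)" for i by (rule subalg_FP)
    show "i \<le> k \<Longrightarrow> sets (FP i) \<subseteq> sets (FP k)" for i k by (rule FP_mono)
    show "d k \<in> borel_measurable (FP i)" if "k < i" for k i
    proof -
      have "I (Suc k) j \<in> borel_measurable (FP i)" using that by (intro I_FP) simp
      moreover have "(\<lambda>\<omega>. p k j \<omega>) \<in> borel_measurable (FP i)"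
        by (rule FP_transfer[OF p_FP]) (use that in simp)
      ultimately show ?thesis unfolding d_def by simp
    qed
    show "d i \<in> borel_measurable M" for i by (rule dM)
    show "integrable M (\<lambda>\<omega>. (d i \<omega>)\<^sup>2)" for i by (rule dsq)
    show "(\<integral>\<omega>. g \<omega> * d i \<omega> \<partial>M) = 0"
      if g: "g \<in> borel_measurable (FP i)" "integrable M (\<lambda>\<omega>. (g \<omega>)\<^sup>2)" for i g
    proof -
      have "(\<integral>\<omega>. g \<omega> * d i \<omega> \<partial>M) = (\<integral>\<omega>. (1 / (real i + 1)) * (g \<omega> * (I (Suc i) j \<omega> - p i j \<omega>)) \<partial>M)"
        unfolding d_def by simp
      also have "\<dots> = (1 / (real i + 1)) * (\<integral>\<omega>. g \<omega> * (I (Suc i) j \<omega> - p i j \<omega>) \<partial>M)"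
        by (rule integral_mult_right_zero)
      also have "\<dots> = 0" using sel_orth[OF g] by simp
      finally show ?thesis .
    qed
  qed
  have "summable (\<lambda>i. \<integral>\<omega>. (d i \<omega>)\<^sup>2 \<partial>M)"
  proof (rule summable_comparison_test[OF _ summable_inv_sq[of "(2 + 2 * E)\<^sup>2"]])
    show "\<exists>N. \<forall>n\<ge>N. norm (\<integral>\<omega>. (d n \<omega>)\<^sup>2 \<partial>M) \<le> (2 + 2 * E)\<^sup>2 * (1 / (real n + 1)\<^sup>2)"
    proof (intro exI allI impI)
      fix n :: nat
      have "(\<integral>\<omega>. (d n \<omega>)\<^sup>2 \<partial>M) \<le> (\<integral>\<omega>. (2 + 2 * E)\<^sup>2 * (1 / (real n + 1)\<^sup>2) \<partial>M)"
        by (intro integral_mono dsq dsq_bd) auto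
      also have "\<dots> = (2 + 2 * E)\<^sup>2 * (1 / (real n + 1)\<^sup>2)" by (simp add: prob_space)
      finally show "norm (\<integral>\<omega>. (d n \<omega>)\<^sup>2 \<partial>M) \<le> (2 + 2 * E)\<^sup>2 * (1 / (real n + 1)\<^sup>2)"
        by simp
    qed
  qed
  from mg.mg_converges[OF this] show ?thesis unfolding d_def .
qed

end


lemma abel_identity:
  fixes a b R :: "nat \<Rightarrow> real"
  assumes a: "\<And>i. a i = b i * (R (Suc i) - R i)" and RK: "R K = 0"
  shows "K \<le> n \<Longrightarrow> (\<Sum>i\<in>{K..<n}. a i) = b n * R n - (\<Sum>i\<in>{K..<n}. (b (Suc i) - b i) * R (Suc i))"
proof (induction n rule: dec_induct)
  case base then show ?case using RK by simp
next
  case (step n)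
  then show ?case using a[of n] by (simp add: algebra_simps)
qed

lemma kronecker:
  fixes a b :: "nat \<Rightarrow> real"
  assumes mono: "mono b" and pos: "\<And>n. b n > 0" and lim: "filterlim b at_top sequentially"
    and conv: "convergent (\<lambda>n. \<Sum>i<n. a i / b i)"
  shows "(\<lambda>n. (\<Sum>i<n. a i) / b n) \<longlonglongrightarrow> 0"
proof (rule LIMSEQ_I)
  fix r :: real assume r: "r > 0"
  define T where "T n = (\<Sum>i<n. a i / b i)" for n
  have "Cauchy T" using conv Cauchy_convergent_iff unfolding T_def by blast
  then obtain K where K: "\<And>m n. m \<ge> K \<Longrightarrow> n \<ge> K \<Longrightarrow> \<bar>T m - T n\<bar> < r / 4"
    using r unfolding Cauchy_def dist_real_def by (metis divide_pos_pos zero_less_numeral)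
  define R where "R n = T n - T K" for n
  have aR: "a i = b i * (R (Suc i) - R i)" for i
    unfolding R_def T_def using pos[of i] by simp
  have Rb: "\<bar>R n\<bar> \<le> r / 4" if "n \<ge> K" for n unfolding R_def using K[OF that, of K] by simp
  have bm: "b i \<le> b j" if "i \<le> j" for i j using mono that by (simp add: mono_def)
  define Cc where "Cc = \<bar>\<Sum>i<K. a i\<bar>"
  have main: "\<bar>\<Sum>i<n. a i\<bar> \<le> Cc + b n * (r / 2)" if "n \<ge> K" for n
  proof -
    have split: "(\<Sum>i<n. a i) = (\<Sum>i<K. a i) + (\<Sum>i\<in>{K..<n}. a i)"
      using that by (metis atLeast0LessThan le0 sum.atLeastLessThan_concat)
    have id: "(\<Sum>i\<in>{K..<n}. a i) = b n * R n - (\<Sum>i\<in>{K..<n}. (b (Suc i) - b i) * R (Suc i))"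
      by (rule abel_identity[where a=a and b=b and R=R and K=K]) (use that aR in \<open>auto simp: R_def\<close>)
    have t1: "\<bar>b n * R n\<bar> \<le> b n * (r / 4)"
      using Rb[OF that] pos[of n] by (simp add: abs_mult mult_left_mono)
    have "\<bar>\<Sum>i\<in>{K..<n}. (b (Suc i) - b i) * R (Suc i)\<bar> \<le> (\<Sum>i\<in>{K..<n}. (b (Suc i) - b i) * (r / 4))"
    proof -
      have "\<bar>\<Sum>i\<in>{K..<n}. (b (Suc i) - b i) * R (Suc i)\<bar> \<le> (\<Sum>i\<in>{K..<n}. \<bar>(b (Suc i) - b i) * R (Suc i)\<bar>)"
        by (rule sum_abs)
      also have "\<dots> \<le> (\<Sum>i\<in>{K..<n}. (b (Suc i) - b i) * (r / 4))"
      proof (rule sum_mono)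
        fix i assume "i \<in> {K..<n}"
        then have "\<bar>R (Suc i)\<bar> \<le> r / 4" "b (Suc i) - b i \<ge> 0" using Rb bm[of i "Suc i"] by auto
        then have "(b (Suc i) - b i) * \<bar>R (Suc i)\<bar> \<le> (b (Suc i) - b i) * (r / 4)"
          by (intro mult_left_mono) auto
        then show "\<bar>(b (Suc i) - b i) * R (Suc i)\<bar> \<le> (b (Suc i) - b i) * (r / 4)"
          using \<open>b (Suc i) - b i \<ge> 0\<close> by (simp add: abs_mult)
      qed
      finally show ?thesis .
    qed
    also have "(\<Sum>i\<in>{K..<n}. (b (Suc i) - b i) * (r / 4)) = (b n - b K) * (r / 4)"
    proof -
      have "(\<Sum>i\<in>{K..<n}. (b (Suc i) - b i) * (r / 4)) = (\<Sum>i\<in>{K..<n}. (b (Suc i) - b i)) * (r / 4)"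
        by (rule sum_distrib_right[symmetric])
      also have "(\<Sum>i\<in>{K..<n}. (b (Suc i) - b i)) = b n - b K" using that by (rule sum_Suc_diff')
      finally show ?thesis .
    qed
    also have "\<dots> \<le> b n * (r / 4)" using pos[of K] r by (simp add: mult_right_mono)
    finally have t2: "\<bar>\<Sum>i\<in>{K..<n}. (b (Suc i) - b i) * R (Suc i)\<bar> \<le> b n * (r / 4)" .
    have "\<bar>\<Sum>i<n. a i\<bar> \<le> Cc + \<bar>\<Sum>i\<in>{K..<n}. a i\<bar>" unfolding split Cc_def by (rule abs_triangle_ineq)
    also have "\<bar>\<Sum>i\<in>{K..<n}. a i\<bar> \<le> b n * (r / 4) + b n * (r / 4)"
      unfolding id using t1 t2 by (smt (verit))
    finally show ?thesis by (simp add: mult.commute)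
  qed
  have "eventually (\<lambda>n. b n > 2 * (Cc + 1) / r) sequentially"
    using lim by (simp add: filterlim_at_top_dense)
  then obtain N where N: "\<And>n. n \<ge> N \<Longrightarrow> b n > 2 * (Cc + 1) / r" by (auto simp: eventually_sequentially)
  show "\<exists>no. \<forall>n\<ge>no. norm ((\<Sum>i<n. a i) / b n - 0) < r"
  proof (intro exI allI impI)
    fix n assume n: "n \<ge> max K N"
    have bn: "b n > 0" by (rule pos)
    have h1: "2 * (Cc + 1) / r < b n" using N[of n] n by simp
    have h2: "2 * (Cc + 1) < b n * r" using h1 r by (simp add: pos_divide_less_eq)
    define P where "P = b n * r"
    have h3a: "2 * Cc < 2 * (Cc + 1)" by simp
    have h3: "2 * Cc < P" using h3a h2 unfolding P_def[symmetric] by (rule less_trans)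
    have h4: "b n * (r / 2) = P / 2" unfolding P_def by simp
    have h5: "\<bar>\<Sum>i<n. a i\<bar> \<le> Cc + P / 2" using main[of n] n unfolding h4 by simp
    have h6: "\<bar>\<Sum>i<n. a i\<bar> < P" using h3 h5 by linarith
    have h7': "P = r * b n" unfolding P_def by (rule mult.commute)
    have h7: "\<bar>\<Sum>i<n. a i\<bar> < r * b n" using h6 unfolding h7' .
    have h8: "\<bar>\<Sum>i<n. a i\<bar> / b n < r" by (subst pos_divide_less_eq[OF bn]) (rule h7)
    have h9: "\<bar>(\<Sum>i<n. a i) / b n\<bar> = \<bar>\<Sum>i<n. a i\<bar> / b n" using bn by (simp add: abs_divide)
    have h10: "\<bar>b n\<bar> = b n" using bn by simp
    show "norm ((\<Sum>i<n. a i) / b n - 0) < r" using h8 h9 h10 unfolding real_norm_def diff_0_right by (simp only:)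
  qed
qed

definition gN :: "nat \<Rightarrow> real" where "gN r = (if r = 0 then 0 else 3 - 2 / real r)"

lemma gN_le3: "gN r \<le> 3" unfolding gN_def by simp

lemma count_sq_bound:
  fixes e :: "nat \<Rightarrow> bool"
  defines "Nc \<equiv> (\<lambda>n. (\<Sum>k\<le>n. (if e k then 1 else 0)) :: nat)"
  shows "(\<Sum>i<n. (if e (Suc i) then 1 / (max 1 (real (Nc i)))\<^sup>2 else 0)) \<le> gN (Nc n)"
proof (induction n)
  case 0
  show ?case
  proof (cases "Nc 0")
    case (Suc k)
    have "2 / real (Suc k) \<le> 2" by (simp add: divide_le_eq)
    then show ?thesis using Suc by (simp add: gN_def)
  qed (simp add: gN_def)
next
  case (Suc n)
  show ?case
  proof (cases "e (Suc n)")
    case False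
    then have "Nc (Suc n) = Nc n" unfolding Nc_def by simp
    then show ?thesis using Suc False by simp
  next
    case True
    define r where "r = Nc n"
    have NS: "Nc (Suc n) = Suc r" unfolding Nc_def r_def using True by simp
    have step: "gN r + 1 / (max 1 (real r))\<^sup>2 \<le> gN (Suc r)"
    proof (cases "r = 0")
      case True then show ?thesis by (simp add: gN_def)
    next
      case False
      then have r1: "real r \<ge> 1" by simp
      have "1 / (real r)\<^sup>2 + 2 / (real r + 1) \<le> 2 / real r"
      proof -
        define x where "x = real r"
        have x1: "x \<ge> 1" using r1 unfolding x_def .
        have nz: "x \<noteq> 0" "x + 1 \<noteq> 0" "x * x \<noteq> 0" "x * x * (x + 1) \<noteq> 0" using x1 by auto
        have eq: "2 / x - 2 / (x + 1) - 1 / x\<^sup>2 = (x - 1) / (x\<^sup>2 * (x + 1))"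
          unfolding power2_eq_square using nz by (simp add: divide_simps)
        have "(x - 1) / (x\<^sup>2 * (x + 1)) \<ge> 0" using x1 by simp
        then have "1 / x\<^sup>2 + 2 / (x + 1) \<le> 2 / x" using eq by linarith
        then show ?thesis unfolding x_def .
      qed
      moreover have "gN r = 3 - 2 / real r" using False by (simp add: gN_def)
      moreover have "gN (Suc r) = 3 - 2 / (real r + 1)" by (simp add: gN_def add.commute)
      moreover have "max 1 (real r) = real r" using r1 by simp
      ultimately show ?thesis by simp
    qed
    have "(\<Sum>i<Suc n. (if e (Suc i) then 1 / (max 1 (real (Nc i)))\<^sup>2 else 0))
        = (\<Sum>i<n. (if e (Suc i) then 1 / (max 1 (real (Nc i)))\<^sup>2 else 0)) + 1 / (max 1 (real r))\<^sup>2"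
      using True by (simp add: r_def)
    also have "\<dots> \<le> gN r + 1 / (max 1 (real r))\<^sup>2" using Suc unfolding r_def by simp
    also have "\<dots> \<le> gN (Nc (Suc n))" using step NS by simp
    finally show ?thesis .
  qed
qed



lemma L2_int:
  fixes g :: "'a \<Rightarrow> real"
  assumes "finite_measure M" "g \<in> borel_measurable M" "integrable M (\<lambda>x. (g x)\<^sup>2)"
  shows "integrable M g"
proof -
  interpret finite_measure M by fact
  have i: "integrable M (\<lambda>x. 1 + (g x)\<^sup>2)" using assms by simp
  show ?thesis
  proof (rule Bochner_Integration.integrable_bound[OF i assms(2)])
    show "AE x in M. norm (g x) \<le> norm (1 + (g x)\<^sup>2)"
    proof (intro AE_I2)
      fix x
      have "\<bar>g x\<bar> \<le> 1 + (g x)\<^sup>2"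
      proof (cases "\<bar>g x\<bar> \<le> 1")
        case True then show ?thesis by (smt (verit) zero_le_power2)
      next
        case False
        then have "\<bar>g x\<bar> * 1 \<le> \<bar>g x\<bar> * \<bar>g x\<bar>" by (intro mult_left_mono) auto
        then have "\<bar>g x\<bar> \<le> (g x)\<^sup>2" by (simp add: power2_eq_square abs_mult_self_eq)
        then show ?thesis by simp
      qed
      then show "norm (g x) \<le> norm (1 + (g x)\<^sup>2)" by simp
    qed
  qed
qed

context setting
begin

definition gen_pc :: "nat \<Rightarrow> 'a set set" where
  "gen_pc n = ({\<xi> k -` A \<inter> space M | k A. k \<le> Suc n} \<union>
      {\<zeta> i k -` B \<inter> space M | i k B. k \<le> n \<and> B \<in> sets borel})"

definition FC :: "nat \<Rightarrow> 'a measure" where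
  "FC n = sigma (space M) (gen_pc n)"

lemma gen_pc_sets: "gen_pc n \<subseteq> sets M"
proof -
  have "\<xi> k -` A \<inter> space M \<in> sets M" for k A
    using measurable_sets[OF xi_meas[of k], of A] by simp
  moreover have "B \<in> sets borel \<Longrightarrow> \<zeta> i k -` B \<inter> space M \<in> sets M" for i k B
    using measurable_sets[OF zeta_meas[of i k]] by simp
  ultimately show ?thesis unfolding gen_pc_def by blast
qed

lemma gen_pc_pow: "gen_pc n \<subseteq> Pow (space M)"
  unfolding gen_pc_def by blast

lemma space_FC[simp]: "space (FC n) = space M"
  unfolding FC_def by (simp add: space_measure_of_conv)

lemma sets_FC: "sets (FC n) = sigma_sets (space M) (gen_pc n)"
  unfolding FC_def using gen_pc_pow by (simp add: sets_measure_of)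

lemma sets_FC_pc: "sets (FC n) = past_and_choice M \<xi> \<zeta> n"
  unfolding sets_FC past_and_choice_def gen_pc_def ..

lemma subalg_FC: "subalgebra M (FC n)"
  unfolding subalgebra_def using gen_pc_sets
  by (simp add: sets_FC sets.sigma_sets_subset)

lemma FC_mono: "i \<le> j \<Longrightarrow> sets (FC i) \<subseteq> sets (FC j)"
proof -
  assume ij: "i \<le> j"
  have "gen_pc i \<subseteq> gen_pc j"
    unfolding gen_pc_def using ij by (blast intro: le_trans)
  then show ?thesis unfolding sets_FC by (rule sigma_sets_mono')
qed

lemma FC_transfer: "f \<in> borel_measurable (FC i) \<Longrightarrow> i \<le> k \<Longrightarrow> f \<in> borel_measurable (FC k)"
  by (rule measurable_from_subalg[of "FC k" "FC i"]) (auto simp: subalgebra_def FC_mono)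

lemma xi_FC: "k \<le> Suc n \<Longrightarrow> \<xi> k \<in> measurable (FC n) (count_space UNIV)"
proof (rule measurableI)
  fix A :: "'m set" assume "k \<le> Suc n" "A \<in> sets (count_space UNIV)"
  then have "\<xi> k -` A \<inter> space M \<in> gen_pc n" unfolding gen_pc_def by blast
  then show "\<xi> k -` A \<inter> space (FC n) \<in> sets (FC n)" unfolding sets_FC by auto
qed auto

lemma zeta_FC: "k \<le> n \<Longrightarrow> \<zeta> i k \<in> borel_measurable (FC n)"
proof (rule measurableI)
  fix B :: "real set" assume "k \<le> n" "B \<in> sets borel"
  then have "\<zeta> i k -` B \<inter> space M \<in> gen_pc n" unfolding gen_pc_def by blast
  then show "\<zeta> i k -` B \<inter> space (FC n) \<in> sets (FC n)" unfolding sets_FC by auto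
qed auto

lemma indep_FC:
  fixes \<phi> :: "real \<Rightarrow> real"
  assumes f: "f \<in> borel_measurable (FC n)" and phi: "\<phi> \<in> borel_measurable borel"
    and fi: "integrable M f" and Xi: "integrable M (\<lambda>\<omega>. \<phi> (\<zeta> l (Suc n) \<omega>))"
  shows "(\<integral>\<omega>. f \<omega> * \<phi> (\<zeta> l (Suc n) \<omega>) \<partial>M) = (\<integral>\<omega>. f \<omega> \<partial>M) * (\<integral>\<omega>. \<phi> (\<zeta> l (Suc n) \<omega>) \<partial>M)"
proof -
  define X where "X \<omega> = \<phi> (\<zeta> l (Suc n) \<omega>)" for \<omega>
  have fM: "f \<in> borel_measurable M" by (rule measurable_from_subalg[OF subalg_FC f])
  have XM: "X \<in> borel_measurable M" unfolding X_def
    using measurable_compose[OF zeta_meas phi] by (simp add: comp_def)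
  have A: "sigma_sets (space M) {f -` A \<inter> space M | A. A \<in> sets borel} \<subseteq> past_and_choice M \<xi> \<zeta> n"
  proof -
    have "{f -` A \<inter> space M | A. A \<in> sets borel} \<subseteq> sets (FC n)"
      using measurable_sets[OF f] by auto
    then have "sigma_sets (space (FC n)) {f -` A \<inter> space M | A. A \<in> sets borel} \<subseteq> sets (FC n)"
      by (rule sets.sigma_sets_subset)
    then show ?thesis using sets_FC_pc by simp
  qed
  have B: "sigma_sets (space M) {X -` A \<inter> space M | A. A \<in> sets borel} \<subseteq> noise_events M \<zeta> (Suc n)"
    unfolding noise_events_def
  proof (rule sigma_sets_mono')
    show "{X -` A \<inter> space M | A. A \<in> sets borel}
        \<subseteq> {\<zeta> i (Suc n) -` B \<inter> space M | i B. B \<in> sets borel}"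
    proof safe
      fix A :: "real set" assume "A \<in> sets borel"
      then have "\<phi> -` A \<in> sets borel" using measurable_sets[OF phi] by simp
      moreover have "X -` A \<inter> space M = \<zeta> l (Suc n) -` (\<phi> -` A) \<inter> space M" unfolding X_def by auto
      ultimately show "\<exists>i B. X -` A \<inter> space M = \<zeta> i (Suc n) -` B \<inter> space M \<and> B \<in> sets borel" by blast
    qed
  qed
  have ind: "indep_set (past_and_choice M \<xi> \<zeta> n) (noise_events M \<zeta> (Suc n))"
    by (rule zeta_indep_past)
  have ind2: "indep_set (sigma_sets (space M) {f -` A \<inter> space M | A. A \<in> sets borel})
                        (sigma_sets (space M) {X -` A \<inter> space M | A. A \<in> sets borel})"
    using ind A B unfolding indep_sets2_eq by blast
  have iv: "indep_var borel f borel X"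
    unfolding indep_var_eq using ind2 fM XM by simp
  show ?thesis using indep_var_lebesgue_integral[OF iv fi] Xi unfolding X_def by simp
qed

lemma zeta_sq_const: "(\<integral>\<omega>. (\<zeta> l n \<omega>)\<^sup>2 \<partial>M) = (\<integral>\<omega>. (\<zeta> l 0 \<omega>)\<^sup>2 \<partial>M)"
proof -
  have sq: "(\<lambda>x::real. x\<^sup>2) \<in> borel_measurable borel" by simp
  have "(\<integral>\<omega>. (\<zeta> l n \<omega>)\<^sup>2 \<partial>M) = (\<integral>x. x\<^sup>2 \<partial>distr M borel (\<zeta> l n))"
    by (rule integral_distr[OF zeta_meas sq, symmetric])
  also have "distr M borel (\<zeta> l n) = distr M borel (\<zeta> l 0)" using zeta_iid[of l] by blast
  also have "(\<integral>x. x\<^sup>2 \<partial>distr M borel (\<zeta> l 0)) = (\<integral>\<omega>. (\<zeta> l 0 \<omega>)\<^sup>2 \<partial>M)"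
    by (rule integral_distr[OF zeta_meas sq])
  finally show ?thesis .
qed

definition Nc :: "'m \<Rightarrow> nat \<Rightarrow> 'a \<Rightarrow> nat" where
  "Nc j n \<omega> = (\<Sum>k\<le>n. (if \<xi> k \<omega> = j then 1 else 0))"

lemma Nc_real: "real (Nc j n \<omega>) = (\<Sum>k\<le>n. I k j \<omega>)"
  unfolding Nc_def I_def of_nat_sum by (intro sum.cong) auto

lemma Nc_FC: "n \<le> Suc i \<Longrightarrow> (\<lambda>\<omega>. real (Nc j n \<omega>)) \<in> borel_measurable (FC i)"
  unfolding Nc_real unfolding I_def
  by (intro borel_measurable_sum ind_meas xi_FC) auto

definition hN :: "'m \<Rightarrow> nat \<Rightarrow> 'a \<Rightarrow> real" where
  "hN j i \<omega> = I (Suc i) j \<omega> / max 1 (real (Nc j i \<omega>))"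

lemma hN_FC: "i \<le> k \<Longrightarrow> hN j i \<in> borel_measurable (FC k)"
proof -
  assume ik: "i \<le> k"
  have "hN j i \<in> borel_measurable (FC i)"
    unfolding hN_def I_def
    by (intro borel_measurable_divide borel_measurable_max borel_measurable_const ind_meas xi_FC Nc_FC) auto
  then show ?thesis using FC_transfer ik by blast
qed

lemma hN_bound: "\<bar>hN j i \<omega>\<bar> \<le> 1"
  unfolding hN_def I_def by (auto simp: divide_le_eq)

lemma hN_sq_sum: "(\<Sum>i<n. (hN j i \<omega>)\<^sup>2) \<le> 3"
proof -
  have "(hN j i \<omega>)\<^sup>2 = (if \<xi> (Suc i) \<omega> = j then 1 / (max 1 (real (Nc j i \<omega>)))\<^sup>2 else 0)" for i
    unfolding hN_def I_def by (simp add: power_divide)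
  then have "(\<Sum>i<n. (hN j i \<omega>)\<^sup>2) = (\<Sum>i<n. (if \<xi> (Suc i) \<omega> = j then 1 / (max 1 (real (Nc j i \<omega>)))\<^sup>2 else 0))"
    by simp
  also have "\<dots> \<le> gN (Nc j n \<omega>)"
    using count_sq_bound[of "\<lambda>k. \<xi> k \<omega> = j" n] unfolding Nc_def by simp
  also have "\<dots> \<le> 3" by (rule gN_le3)
  finally show ?thesis .
qed

lemma T_conv: "AE \<omega> in M. convergent (\<lambda>n. \<Sum>i<n. hN j i \<omega> * \<zeta> j (Suc i) \<omega>)"
proof -
  define d where "d i \<omega> = hN j i \<omega> * \<zeta> j (Suc i) \<omega>" for i \<omega>
  define \<sigma> where "\<sigma> = (\<integral>\<omega>. (\<zeta> j 0 \<omega>)\<^sup>2 \<partial>M)"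
  have hM: "hN j i \<in> borel_measurable M" for i
    by (rule measurable_from_subalg[OF subalg_FC hN_FC[of i i]]) simp
  have dM: "d i \<in> borel_measurable M" for i unfolding d_def using hM zeta_meas by simp
  have dsq: "integrable M (\<lambda>\<omega>. (d i \<omega>)\<^sup>2)" for i
  proof (rule Bochner_Integration.integrable_bound[OF zeta_var[of j "Suc i"]])
    show "(\<lambda>\<omega>. (d i \<omega>)\<^sup>2) \<in> borel_measurable M" using dM by simp
    show "AE \<omega> in M. norm ((d i \<omega>)\<^sup>2) \<le> norm ((\<zeta> j (Suc i) \<omega>)\<^sup>2)"
    proof (intro AE_I2)
      fix \<omega>
      have "(hN j i \<omega>)\<^sup>2 \<le> 1" using hN_bound[of j i \<omega>] by (simp add: abs_square_le_1)
      then have "(hN j i \<omega>)\<^sup>2 * (\<zeta> j (Suc i) \<omega>)\<^sup>2 \<le> 1 * (\<zeta> j (Suc i) \<omega>)\<^sup>2"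
        by (intro mult_right_mono) auto
      then show "norm ((d i \<omega>)\<^sup>2) \<le> norm ((\<zeta> j (Suc i) \<omega>)\<^sup>2)"
        unfolding d_def by (simp add: power_mult_distrib)
    qed
  qed
  have hsq_int: "integrable M (\<lambda>\<omega>. (hN j i \<omega>)\<^sup>2)" for i
  proof (rule integrable_const_bound[where B=1])
    show "AE x in M. norm ((hN j i x)\<^sup>2) \<le> 1"
      using hN_bound by (auto simp: abs_square_le_1)
  qed (use hM in simp)
  have dsq_eq: "(\<integral>\<omega>. (d i \<omega>)\<^sup>2 \<partial>M) = (\<integral>\<omega>. (hN j i \<omega>)\<^sup>2 \<partial>M) * \<sigma>" for i
  proof -
    have "(\<integral>\<omega>. (d i \<omega>)\<^sup>2 \<partial>M) = (\<integral>\<omega>. (hN j i \<omega>)\<^sup>2 * (\<lambda>x. x\<^sup>2) (\<zeta> j (Suc i) \<omega>) \<partial>M)"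
      unfolding d_def by (simp add: power_mult_distrib)
    also have "\<dots> = (\<integral>\<omega>. (hN j i \<omega>)\<^sup>2 \<partial>M) * (\<integral>\<omega>. (\<lambda>x. x\<^sup>2) (\<zeta> j (Suc i) \<omega>) \<partial>M)"
      by (rule indep_FC) (use hN_FC[of i i j] hsq_int zeta_var in auto)
    also have "(\<integral>\<omega>. (\<lambda>x. x\<^sup>2) (\<zeta> j (Suc i) \<omega>) \<partial>M) = \<sigma>" unfolding \<sigma>_def using zeta_sq_const by simp
    finally show ?thesis .
  qed
  interpret mg: mg_setup M FC d
  proof
    show "subalgebra M (FC i)" for i by (rule subalg_FC)
    show "i \<le> k \<Longrightarrow> sets (FC i) \<subseteq> sets (FC k)" for i k by (rule FC_mono)
    show "d k \<in> borel_measurable (FC i)" if "k < i" for k i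
      unfolding d_def using that by (intro borel_measurable_times hN_FC zeta_FC) auto
    show "d i \<in> borel_measurable M" for i by (rule dM)
    show "integrable M (\<lambda>\<omega>. (d i \<omega>)\<^sup>2)" for i by (rule dsq)
    show "(\<integral>\<omega>. g \<omega> * d i \<omega> \<partial>M) = 0"
      if g: "g \<in> borel_measurable (FC i)" "integrable M (\<lambda>\<omega>. (g \<omega>)\<^sup>2)" for i g
    proof -
      have gM: "g \<in> borel_measurable M" by (rule measurable_from_subalg[OF subalg_FC g(1)])
      have gi: "integrable M g" by (rule L2_int[OF finite_measure_axioms gM g(2)])
      have ghF: "(\<lambda>\<omega>. g \<omega> * hN j i \<omega>) \<in> borel_measurable (FC i)"
        using g(1) hN_FC[of i i j] by simp
      have ghi: "integrable M (\<lambda>\<omega>. g \<omega> * hN j i \<omega>)"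
      proof (rule Bochner_Integration.integrable_bound[OF gi])
        show "(\<lambda>\<omega>. g \<omega> * hN j i \<omega>) \<in> borel_measurable M" using gM hM by simp
        show "AE \<omega> in M. norm (g \<omega> * hN j i \<omega>) \<le> norm (g \<omega>)"
          using hN_bound by (auto simp: abs_mult intro!: mult_left_le)
      qed
      have "(\<integral>\<omega>. g \<omega> * d i \<omega> \<partial>M) = (\<integral>\<omega>. (g \<omega> * hN j i \<omega>) * (\<lambda>x. x) (\<zeta> j (Suc i) \<omega>) \<partial>M)"
        unfolding d_def by (simp add: mult.assoc)
      also have "\<dots> = (\<integral>\<omega>. g \<omega> * hN j i \<omega> \<partial>M) * (\<integral>\<omega>. (\<lambda>x. x) (\<zeta> j (Suc i) \<omega>) \<partial>M)"
        by (rule indep_FC[OF ghF]) (use ghi zeta_mean in auto)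
      also have "\<dots> = 0" using zeta_mean by simp
      finally show ?thesis .
    qed
  qed
  have "summable (\<lambda>i. \<integral>\<omega>. (d i \<omega>)\<^sup>2 \<partial>M)"
  proof (rule summableI_nonneg_bounded)
    show "0 \<le> (\<integral>\<omega>. (d i \<omega>)\<^sup>2 \<partial>M)" for i by simp
    show "(\<Sum>i<n. \<integral>\<omega>. (d i \<omega>)\<^sup>2 \<partial>M) \<le> 3 * \<sigma>" for n
    proof -
      have s0: "\<sigma> \<ge> 0" unfolding \<sigma>_def by simp
      have "(\<Sum>i<n. \<integral>\<omega>. (d i \<omega>)\<^sup>2 \<partial>M) = (\<Sum>i<n. \<integral>\<omega>. (hN j i \<omega>)\<^sup>2 \<partial>M) * \<sigma>"
        by (simp add: dsq_eq sum_distrib_right)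
      also have "(\<Sum>i<n. \<integral>\<omega>. (hN j i \<omega>)\<^sup>2 \<partial>M) = (\<integral>\<omega>. (\<Sum>i<n. (hN j i \<omega>)\<^sup>2) \<partial>M)"
        by (rule Bochner_Integration.integral_sum[symmetric]) (use hsq_int in auto)
      also have "\<dots> \<le> (\<integral>\<omega>. (3::real) \<partial>M)"
        by (intro integral_mono hN_sq_sum) (use hsq_int in auto)
      also have "(\<integral>\<omega>. (3::real) \<partial>M) = 3" by (simp add: prob_space)
      finally show ?thesis using s0 by (simp add: mult_right_mono)
    qed
  qed
  from mg.mg_converges[OF this] show ?thesis unfolding d_def .
qed

end


context setting
begin

lemma x_rec: "x_proc \<xi> (Suc n) \<omega> $ j = x_proc \<xi> n \<omega> $ j + (I (Suc n) j \<omega> - x_proc \<xi> n \<omega> $ j) / (real n + 1)"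
  unfolding I_def by (simp add: add.commute)

lemma x_simplex: "x_proc \<xi> n \<omega> \<in> unit_simplex"
proof (induction n)
  case 0
  have "(\<Sum>i\<in>(UNIV::'m set). 1 / real CARD('m)) = (1::real)" by simp
  then show ?case unfolding unit_simplex_def by simp
next
  case (Suc n)
  have x0: "\<And>i. x_proc \<xi> n \<omega> $ i \<ge> 0" and x1: "(\<Sum>i\<in>UNIV. x_proc \<xi> n \<omega> $ i) = 1"
    using Suc by (auto simp: unit_simplex_def)
  have xle: "x_proc \<xi> n \<omega> $ i \<le> 1" for i
  proof -
    have "x_proc \<xi> n \<omega> $ i \<le> (\<Sum>l\<in>UNIV. x_proc \<xi> n \<omega> $ l)"
      by (rule member_le_sum) (use x0 in auto)
    then show ?thesis using x1 by simp
  qed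
  have nn: "x_proc \<xi> (Suc n) \<omega> $ i \<ge> 0" for i
  proof -
    have e: "x_proc \<xi> (Suc n) \<omega> $ i = (x_proc \<xi> n \<omega> $ i * real n + I (Suc n) i \<omega>) / (real n + 1)"
      unfolding x_rec by (simp add: field_simps)
    have "I (Suc n) i \<omega> \<ge> 0" unfolding I_def by simp
    then show ?thesis unfolding e using x0[of i] by simp
  qed
  have sI: "(\<Sum>i\<in>UNIV. I (Suc n) i \<omega>) = 1"
    unfolding I_def by (simp add: sum.delta)
  have "(\<Sum>i\<in>UNIV. x_proc \<xi> (Suc n) \<omega> $ i)
      = (\<Sum>i\<in>UNIV. x_proc \<xi> n \<omega> $ i) + ((\<Sum>i\<in>UNIV. I (Suc n) i \<omega>) - (\<Sum>i\<in>UNIV. x_proc \<xi> n \<omega> $ i)) / (real n + 1)"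
    unfolding x_rec sum.distrib sum_divide_distrib[symmetric] sum_subtractf ..
  also have "\<dots> = 1" using x1 sI by simp
  finally show ?case unfolding unit_simplex_def using nn by simp
qed

lemma x_nonneg: "x_proc \<xi> n \<omega> $ j \<ge> 0"
  using x_simplex[of n \<omega>] by (simp add: unit_simplex_def)

lemma x_le1: "x_proc \<xi> n \<omega> $ j \<le> 1"
proof -
  have "x_proc \<xi> n \<omega> $ j \<le> (\<Sum>l\<in>UNIV. x_proc \<xi> n \<omega> $ l)"
    by (rule member_le_sum) (use x_nonneg in auto)
  then show ?thesis using x_simplex[of n \<omega>] by (simp add: unit_simplex_def)
qed

lemma Nc_mono: "m \<le> n \<Longrightarrow> Nc j m \<omega> \<le> Nc j n \<omega>"
  unfolding Nc_def by (rule sum_mono2) auto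

lemma Nc_Suc: "real (Nc j (Suc n) \<omega>) = real (Nc j n \<omega>) + I (Suc n) j \<omega>"
  unfolding Nc_real by simp

lemma eps_ev_le1: "eventually (\<lambda>n. \<epsilon> n \<le> 1) sequentially"
  using order_tendstoD(2)[OF eps_lim, of 1] by (auto elim: eventually_mono)

lemma p_ge_eps: "0 \<le> \<epsilon> n \<Longrightarrow> \<epsilon> n \<le> 1 \<Longrightarrow> p n j \<omega> \<ge> \<epsilon> n / real CARD('m)"
proof -
  assume e: "0 \<le> \<epsilon> n" "\<epsilon> n \<le> 1"
  have "0 \<le> qsel \<alpha> \<mu> \<zeta> \<xi> n \<omega> j" by (rule qsel_bounds)
  then have "0 \<le> (1 - \<epsilon> n) * qsel \<alpha> \<mu> \<zeta> \<xi> n \<omega> j" using e by simp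
  then show ?thesis unfolding sel_prob_q by simp
qed

lemma eps_div_unbounded:
  assumes "\<And>n. n \<ge> N \<Longrightarrow> \<epsilon> n \<ge> 0"
  shows "\<exists>k. (\<Sum>i<k. \<epsilon> (i + N) / (real (i + N) + 1)) > Z"
  using nonsum_unbounded[OF eps_n_nsum, of N Z] assms by simp

lemma Nc_unbounded:
  assumes S: "convergent (\<lambda>n. \<Sum>i<n. (I (Suc i) j \<omega> - p i j \<omega>) / (real i + 1))"
  shows "filterlim (\<lambda>n. real (Nc j n \<omega>)) at_top sequentially"
proof -
  define S where "S n = (\<Sum>i<n. (I (Suc i) j \<omega> - p i j \<omega>) / (real i + 1))" for n
  have "Bseq S" using convergent_imp_Bseq[OF S] unfolding S_def .
  then obtain B where B0: "\<forall>n. norm (S n) \<le> B" by (auto simp: Bseq_def)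
  then have B: "\<And>n. \<bar>S n\<bar> \<le> B" by simp
  obtain N where N0: "\<forall>n\<ge>N. 0 < \<epsilon> n \<and> \<epsilon> n \<le> 1"
    using eventually_conj[OF eps_ev_pos eps_ev_le1] by (auto simp: eventually_sequentially)
  then have N: "\<And>n. n \<ge> N \<Longrightarrow> 0 \<le> \<epsilon> n \<and> \<epsilon> n \<le> 1" by (simp add: less_imp_le)
  have unb: "\<exists>n. real (Nc j n \<omega>) > Z" for Z
  proof (rule ccontr)
    assume "\<not> ?thesis"
    then have bd: "\<And>n. real (Nc j n \<omega>) \<le> Z" by (simp add: not_less)
    define C where "C = (\<Sum>i<N. p i j \<omega> / (real i + 1))"
    have key: "(\<Sum>i<k. \<epsilon> (i + N) / (real (i + N) + 1)) / real CARD('m) \<le> Z + B - C" for k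
    proof -
      have "(\<Sum>i<k. \<epsilon> (i + N) / (real (i + N) + 1)) / real CARD('m)
            = (\<Sum>i<k. \<epsilon> (i + N) / real CARD('m) / (real (i + N) + 1))"
        unfolding sum_divide_distrib by (rule sum.cong) (simp_all add: divide_divide_eq_left mult.commute)
      also have "\<dots> \<le> (\<Sum>i<k. p (i + N) j \<omega> / (real (i + N) + 1))"
        by (intro sum_mono divide_right_mono p_ge_eps) (use N in auto)
      also have "\<dots> = (\<Sum>i\<in>{N..<N+k}. p i j \<omega> / (real i + 1))"
        by (rule sum.reindex_bij_witness[of _ "\<lambda>i. i - N" "\<lambda>i. i + N"]) auto
      also have "\<dots> = (\<Sum>i<N+k. p i j \<omega> / (real i + 1)) - C"
        unfolding C_def using sum.atLeastLessThan_concat[of 0 N "N+k" "\<lambda>i. p i j \<omega> / (real i + 1)"]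
        by (simp add: atLeast0LessThan)
      also have "(\<Sum>i<N+k. p i j \<omega> / (real i + 1)) = (\<Sum>i<N+k. I (Suc i) j \<omega> / (real i + 1)) - S (N + k)"
        unfolding S_def by (simp add: sum_subtractf diff_divide_distrib)
      also have "(\<Sum>i<N+k. I (Suc i) j \<omega> / (real i + 1)) \<le> (\<Sum>i<N+k. I (Suc i) j \<omega>)"
        by (intro sum_mono) (auto simp: I_def)
      also have "(\<Sum>i<N+k. I (Suc i) j \<omega>) \<le> real (Nc j (N + k) \<omega>)"
      proof -
        have "(\<Sum>i<N+k. I (Suc i) j \<omega>) = (\<Sum>i\<in>{1..N+k}. I i j \<omega>)"
          by (rule sum.reindex_bij_witness[of _ "\<lambda>i. i - 1" Suc]) auto
        also have "\<dots> \<le> (\<Sum>i\<le>N+k. I i j \<omega>)" by (intro sum_mono2) (auto simp: I_def)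
        finally show ?thesis unfolding Nc_real .
      qed
      finally show ?thesis using bd[of "N + k"] B[of "N + k"] by linarith
    qed
    obtain k where k: "(\<Sum>i<k. \<epsilon> (i + N) / (real (i + N) + 1)) > (Z + B - C) * real CARD('m)"
      using eps_div_unbounded[of N "(Z + B - C) * real CARD('m)"] N by blast
    have cp: "real CARD('m) > 0" by simp
    from k have "(\<Sum>i<k. \<epsilon> (i + N) / (real (i + N) + 1)) / real CARD('m) > Z + B - C"
      using cp by (simp add: pos_less_divide_eq)
    with key[of k] show False by linarith
  qed
  show ?thesis
    unfolding filterlim_at_top
  proof
    fix Z
    obtain n0 where "real (Nc j n0 \<omega>) > Z" using unb by blast
    then have "\<forall>n\<ge>n0. Z \<le> real (Nc j n \<omega>)"
    proof (intro allI impI)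
      fix n assume "n \<ge> n0" "real (Nc j n0 \<omega>) > Z"
      then have "real (Nc j n0 \<omega>) \<le> real (Nc j n \<omega>)" using Nc_mono[of n0 n j \<omega>] by simp
      then show "Z \<le> real (Nc j n \<omega>)" using \<open>real (Nc j n0 \<omega>) > Z\<close> by simp
    qed
    then show "eventually (\<lambda>n. Z \<le> real (Nc j n \<omega>)) sequentially"
      by (auto simp: eventually_sequentially)
  qed
qed

end


lemma sum_atMost_shift0: "(\<Sum>k\<le>n. g k) = g 0 + (\<Sum>i<n. g (Suc i))" for g :: "nat \<Rightarrow> real"
  by (induction n) (simp_all add: add.assoc)

context setting
begin

lemma muhat_conv:
  assumes S: "convergent (\<lambda>n. \<Sum>i<n. (I (Suc i) j \<omega> - p i j \<omega>) / (real i + 1))"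
    and T: "convergent (\<lambda>n. \<Sum>i<n. hN j i \<omega> * \<zeta> j (Suc i) \<omega>)"
  shows "(\<lambda>n. mu_hat \<mu> \<zeta> \<xi> n \<omega> j) \<longlonglongrightarrow> \<mu> j"
proof -
  have NF: "filterlim (\<lambda>n. real (Nc j n \<omega>)) at_top sequentially" by (rule Nc_unbounded[OF S])
  define b where "b i = max 1 (real (Nc j i \<omega>))" for i
  define a where "a i = I (Suc i) j \<omega> * \<zeta> j (Suc i) \<omega>" for i
  have bmono: "mono b" unfolding mono_def b_def
    using Nc_mono by (meson max.mono of_nat_le_iff order_refl)
  have bpos: "\<And>n. b n > 0" unfolding b_def by simp
  have blim: "filterlim b at_top sequentially"
  proof (rule filterlim_at_top_mono[OF NF])
    show "eventually (\<lambda>n. real (Nc j n \<omega>) \<le> b n) sequentially" unfolding b_def by simp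
  qed
  have ab: "a i / b i = hN j i \<omega> * \<zeta> j (Suc i) \<omega>" for i
    unfolding a_def b_def hN_def by simp
  have kr: "(\<lambda>n. (\<Sum>i<n. a i) / b n) \<longlonglongrightarrow> 0"
    by (rule kronecker[OF bmono bpos blim]) (use T in \<open>simp add: ab\<close>)
  have c0: "(\<lambda>n. (I 0 j \<omega> * \<zeta> j 0 \<omega>) / real (Nc j n \<omega>)) \<longlonglongrightarrow> 0"
    by (rule tendsto_divide_0[OF tendsto_const]) (rule filterlim_at_top_imp_at_infinity[OF NF])
  have ev1: "eventually (\<lambda>n. real (Nc j n \<omega>) \<ge> 1) sequentially"
    using NF unfolding filterlim_at_top by (erule_tac x=1 in allE) assumption
  have lim2: "(\<lambda>n. \<mu> j + ((I 0 j \<omega> * \<zeta> j 0 \<omega>) / real (Nc j n \<omega>) + (\<Sum>i<n. a i) / b n)) \<longlonglongrightarrow> \<mu> j + (0 + 0)"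
    by (intro tendsto_add tendsto_const c0 kr)
  show ?thesis
  proof (rule Lim_transform_eventually[OF lim2[simplified]])
    show "eventually (\<lambda>n. \<mu> j + ((I 0 j \<omega> * \<zeta> j 0 \<omega>) / real (Nc j n \<omega>) + (\<Sum>i<n. a i) / b n)
                = mu_hat \<mu> \<zeta> \<xi> n \<omega> j) sequentially"
      using ev1
    proof (rule eventually_mono)
      fix n assume N1: "real (Nc j n \<omega>) \<ge> 1"
      have bn: "b n = real (Nc j n \<omega>)" unfolding b_def using N1 by simp
      have den: "(\<Sum>k\<le>n. (if \<xi> k \<omega> = j then 1 else 0)) = real (Nc j n \<omega>)"
        unfolding Nc_real I_def ..
      have num: "(\<Sum>k\<le>n. (if \<xi> k \<omega> = j then 1 else 0) * (\<mu> j + \<zeta> j k \<omega>))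
           = \<mu> j * real (Nc j n \<omega>) + (I 0 j \<omega> * \<zeta> j 0 \<omega> + (\<Sum>i<n. a i))"
      proof -
        have "(\<Sum>k\<le>n. (if \<xi> k \<omega> = j then 1 else 0) * (\<mu> j + \<zeta> j k \<omega>))
            = \<mu> j * (\<Sum>k\<le>n. I k j \<omega>) + (\<Sum>k\<le>n. I k j \<omega> * \<zeta> j k \<omega>)"
          unfolding I_def by (simp add: sum.distrib sum_distrib_left algebra_simps)
        also have "(\<Sum>k\<le>n. I k j \<omega> * \<zeta> j k \<omega>) = I 0 j \<omega> * \<zeta> j 0 \<omega> + (\<Sum>i<n. a i)"
          unfolding a_def by (rule sum_atMost_shift0)
        finally show ?thesis unfolding Nc_real .
      qed
      have "mu_hat \<mu> \<zeta> \<xi> n \<omega> j = (\<mu> j * real (Nc j n \<omega>) + (I 0 j \<omega> * \<zeta> j 0 \<omega> + (\<Sum>i<n. a i))) / real (Nc j n \<omega>)"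
        unfolding mu_hat_def num den ..
      also have "\<dots> = \<mu> j + ((I 0 j \<omega> * \<zeta> j 0 \<omega>) / real (Nc j n \<omega>) + (\<Sum>i<n. a i) / b n)"
        using N1 unfolding bn by (simp add: field_simps)
      finally show "\<mu> j + ((I 0 j \<omega> * \<zeta> j 0 \<omega>) / real (Nc j n \<omega>) + (\<Sum>i<n. a i) / b n)
                = mu_hat \<mu> \<zeta> \<xi> n \<omega> j" by simp
    qed
  qed
qed

end


lemma le_powr_small: "0 \<le> t \<Longrightarrow> t \<le> 1 \<Longrightarrow> 0 < a \<Longrightarrow> a < 1 \<Longrightarrow> t \<le> t powr a" for t a :: real
  using powr_mono'[of a 1 t] by simp

context setting
begin

abbreviation xs where "xs \<equiv> xstar \<mu> \<alpha>"
abbreviation ss where "ss \<equiv> sstar \<mu> \<alpha>"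

lemma xs_pos: "xs $ i > 0" by (rule xstar_pos[OF mu_pos alpha])

lemma xs_simplex: "xs \<in> unit_simplex" by (rule xstar_simplex[OF mu_pos alpha])

lemma ss_pos: "ss > 0" by (rule sstar_pos[OF mu_pos alpha])

lemma p_lower:
  assumes e: "0 \<le> \<epsilon> n" "\<epsilon> n \<le> 1" and d: "0 \<le> \<delta>" "\<delta> < 1"
    and close: "\<And>l. \<bar>mu_hat \<mu> \<zeta> \<xi> n \<omega> l - \<mu> l\<bar> \<le> \<delta> * \<mu> l"
  shows "p n j \<omega> \<ge> (1 - \<epsilon> n) * ((1 - \<delta>) / (1 + \<delta>)) * (xs $ j powr (1 - \<alpha>) * x_proc \<xi> n \<omega> $ j powr \<alpha>)"
proof -
  define x where "x = x_proc \<xi> n \<omega>"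
  define mh where "mh l = mu_hat \<mu> \<zeta> \<xi> n \<omega> l" for l
  define w where "w l = wpow \<alpha> (mh l * x $ l)" for l
  define Y where "Y l = xs $ l powr (1 - \<alpha>) * x $ l powr \<alpha>" for l
  have x0: "x $ l \<ge> 0" for l unfolding x_def by (rule x_nonneg)
  have xS: "x \<in> unit_simplex" unfolding x_def by (rule x_simplex)
  have mhl: "(1 - \<delta>) * \<mu> l \<le> mh l" "mh l \<le> (1 + \<delta>) * \<mu> l" for l
    using close[of l] unfolding mh_def by (auto simp: abs_le_iff algebra_simps)
  have mhpos: "mh l > 0" for l
  proof -
    have "(1 - \<delta>) * \<mu> l > 0" using d mu_pos[of l] by simp
    then show ?thesis using mhl(1)[of l] by linarith
  qed
  have mpe: "(\<mu> l * x $ l) powr \<alpha> = ss powr (1 - \<alpha>) * Y l" for l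
    unfolding Y_def by (rule mu_pow_eq[OF mu_pos alpha x0])
  have wlo: "w l \<ge> (1 - \<delta>) powr \<alpha> * (ss powr (1 - \<alpha>) * Y l)" for l
  proof (cases "x $ l = 0")
    case True then show ?thesis unfolding w_def Y_def using alpha by (simp add: wpow_def)
  next
    case False
    then have xp: "x $ l > 0" using x0[of l] by simp
    have "(1 - \<delta>) powr \<alpha> * (ss powr (1 - \<alpha>) * Y l) = ((1 - \<delta>) * (\<mu> l * x $ l)) powr \<alpha>"
      using d mu_pos[of l] xp by (simp add: powr_mult mpe[symmetric])
    also have "\<dots> \<le> (mh l * x $ l) powr \<alpha>"
      using d mu_pos[of l] xp mhl(1)[of l] alpha
      by (intro powr_mono2) (auto simp: mult.assoc[symmetric] mult_right_mono)
    also have "\<dots> = w l" unfolding w_def wpow_def using mhpos[of l] xp by simp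
    finally show ?thesis .
  qed
  have whi: "w l \<le> (1 + \<delta>) powr \<alpha> * (ss powr (1 - \<alpha>) * Y l)" for l
  proof (cases "x $ l = 0")
    case True then show ?thesis unfolding w_def Y_def using alpha by (simp add: wpow_def)
  next
    case False
    then have xp: "x $ l > 0" using x0[of l] by simp
    have "w l = (mh l * x $ l) powr \<alpha>" unfolding w_def wpow_def using mhpos[of l] xp by simp
    also have "\<dots> \<le> ((1 + \<delta>) * (\<mu> l * x $ l)) powr \<alpha>"
      using d mu_pos[of l] xp mhl(2)[of l] alpha mhpos[of l]
      by (intro powr_mono2) (auto simp: mult.assoc[symmetric] mult_right_mono)
    also have "\<dots> = (1 + \<delta>) powr \<alpha> * (ss powr (1 - \<alpha>) * Y l)"
      using d mu_pos[of l] xp by (simp add: powr_mult mpe[symmetric])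
    finally show ?thesis .
  qed
  have Y0: "Y l \<ge> 0" for l unfolding Y_def by simp
  have sY: "(\<Sum>l\<in>UNIV. Y l) \<le> 1" unfolding Y_def by (rule sum_young_le[OF mu_pos alpha xS])
  have spos: "ss powr (1 - \<alpha>) > 0" using ss_pos by simp
  define W where "W = (\<Sum>l\<in>UNIV. w l)"
  have Wle: "W \<le> (1 + \<delta>) powr \<alpha> * ss powr (1 - \<alpha>)"
  proof -
    have "W \<le> (\<Sum>l\<in>UNIV. (1 + \<delta>) powr \<alpha> * (ss powr (1 - \<alpha>) * Y l))"
      unfolding W_def by (intro sum_mono whi)
    also have "\<dots> = (1 + \<delta>) powr \<alpha> * ss powr (1 - \<alpha>) * (\<Sum>l\<in>UNIV. Y l)"
      by (simp add: sum_distrib_left mult.assoc)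
    also have "\<dots> \<le> (1 + \<delta>) powr \<alpha> * ss powr (1 - \<alpha>) * 1"
      using sY spos by (intro mult_left_mono) auto
    finally show ?thesis by simp
  qed
  have Wpos: "W > 0"
  proof -
    obtain l where xl: "x $ l > 0"
    proof (rule ccontr)
      assume "\<not> thesis"
      have "x $ l = 0" for l
      proof (rule ccontr)
        assume "x $ l \<noteq> 0"
        then have "x $ l > 0" using x0[of l] by simp
        then show False using that \<open>\<not> thesis\<close> by blast
      qed
      then show False using xS by (simp add: unit_simplex_def)
    qed
    have "w l > 0" unfolding w_def wpow_def using mhpos[of l] xl by simp
    moreover have "w l \<le> W" unfolding W_def
      by (rule member_le_sum) (auto simp: w_def wpow_def)
    ultimately show ?thesis by simp
  qed
  have q: "qsel \<alpha> \<mu> \<zeta> \<xi> n \<omega> j = w j / W"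
    unfolding qsel_def Let_def w_def W_def mh_def x_def using Wpos unfolding W_def w_def mh_def x_def by simp
  have rat: "(1 - \<delta>) / (1 + \<delta>) \<le> ((1 - \<delta>) / (1 + \<delta>)) powr \<alpha>"
    using d alpha by (intro le_powr_small) auto
  have "w j / W \<ge> (1 - \<delta>) powr \<alpha> * (ss powr (1 - \<alpha>) * Y j) / ((1 + \<delta>) powr \<alpha> * ss powr (1 - \<alpha>))"
    using wlo[of j] Wle Wpos Y0[of j] spos d
    by (intro frac_le) (auto intro!: mult_nonneg_nonneg simp: w_def wpow_def)
  also have "(1 - \<delta>) powr \<alpha> * (ss powr (1 - \<alpha>) * Y j) / ((1 + \<delta>) powr \<alpha> * ss powr (1 - \<alpha>))
      = ((1 - \<delta>) / (1 + \<delta>)) powr \<alpha> * Y j"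
    using spos d by (simp add: powr_divide)
  finally have qge: "w j / W \<ge> ((1 - \<delta>) / (1 + \<delta>)) powr \<alpha> * Y j" .
  have "((1 - \<delta>) / (1 + \<delta>)) * Y j \<le> ((1 - \<delta>) / (1 + \<delta>)) powr \<alpha> * Y j"
    using rat Y0[of j] by (rule mult_right_mono)
  with qge have qge2: "qsel \<alpha> \<mu> \<zeta> \<xi> n \<omega> j \<ge> ((1 - \<delta>) / (1 + \<delta>)) * Y j" unfolding q by linarith
  have "p n j \<omega> = (1 - \<epsilon> n) * qsel \<alpha> \<mu> \<zeta> \<xi> n \<omega> j + \<epsilon> n / real CARD('m)" by (rule sel_prob_q)
  also have "\<dots> \<ge> (1 - \<epsilon> n) * qsel \<alpha> \<mu> \<zeta> \<xi> n \<omega> j" using e by simp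
  finally have "p n j \<omega> \<ge> (1 - \<epsilon> n) * qsel \<alpha> \<mu> \<zeta> \<xi> n \<omega> j" .
  moreover have "(1 - \<epsilon> n) * qsel \<alpha> \<mu> \<zeta> \<xi> n \<omega> j \<ge> (1 - \<epsilon> n) * (((1 - \<delta>) / (1 + \<delta>)) * Y j)"
    using qge2 e by (intro mult_left_mono) auto
  ultimately show ?thesis unfolding Y_def x_def by (simp add: mult.assoc)
qed

end


context setting
begin

lemma drift_basic:
  assumes X0: "0 \<le> X" and Xle: "X \<le> b * Xs" and b: "0 < b" "b < 1" and Xs: "Xs > 0"
  shows "Xs powr (1 - \<alpha>) * X powr \<alpha> \<ge> X / b powr (1 - \<alpha>)"
proof (cases "X = 0")
  case True then show ?thesis by simp
next
  case False
  then have Xp: "X > 0" using X0 by simp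
  have "Xs / X \<ge> 1 / b" using Xle Xp b by (simp add: field_simps)
  then have "(Xs / X) powr (1 - \<alpha>) \<ge> (1 / b) powr (1 - \<alpha>)"
    using alpha b by (intro powr_mono2) auto
  then have "X * (Xs / X) powr (1 - \<alpha>) \<ge> X * (1 / b) powr (1 - \<alpha>)"
    using Xp by (intro mult_left_mono) auto
  moreover have "X * (Xs / X) powr (1 - \<alpha>) = Xs powr (1 - \<alpha>) * X powr \<alpha>"
  proof -
    have "X * (Xs / X) powr (1 - \<alpha>) = X powr 1 * (Xs powr (1 - \<alpha>) / X powr (1 - \<alpha>))"
      using Xp Xs by (simp add: powr_divide)
    also have "\<dots> = Xs powr (1 - \<alpha>) * (X powr 1 / X powr (1 - \<alpha>))" by simp
    also have "X powr 1 / X powr (1 - \<alpha>) = X powr \<alpha>"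
      using powr_diff[of X 1 "1 - \<alpha>"] by simp
    finally show ?thesis .
  qed
  moreover have "X * (1 / b) powr (1 - \<alpha>) = X / b powr (1 - \<alpha>)" using b by (simp add: powr_divide)
  ultimately show ?thesis by simp
qed

lemma Z_step:
  fixes X S :: "nat \<Rightarrow> real"
  assumes "\<And>n. X (Suc n) = X n + (I (Suc n) j \<omega> - X n) / (real n + 1)"
    and "\<And>n. S (Suc n) = S n + (I (Suc n) j \<omega> - p n j \<omega>) / (real n + 1)"
  shows "X (Suc n) - S (Suc n) = X n - S n + (p n j \<omega> - X n) / (real n + 1)"
  using assms[of n] by (simp add: diff_divide_distrib)

lemma liminf_lower:
  assumes S: "convergent (\<lambda>n. \<Sum>i<n. (I (Suc i) j \<omega> - p i j \<omega>) / (real i + 1))"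
    and MU: "\<And>l. (\<lambda>n. mu_hat \<mu> \<zeta> \<xi> n \<omega> l) \<longlonglongrightarrow> \<mu> l"
    and a: "a < 1"
  shows "eventually (\<lambda>n. x_proc \<xi> n \<omega> $ j \<ge> a * xs $ j) sequentially"
proof (cases "a \<le> 0")
  case True
  then show ?thesis using xs_pos[of j] x_nonneg[of _ \<omega> j]
    by (intro always_eventually allI) (smt (verit) mult_nonpos_nonneg xs_pos)
next
  case False
  then have a0: "a > 0" by simp
  define X where "X n = x_proc \<xi> n \<omega> $ j" for n
  define Sq where "Sq n = (\<Sum>i<n. (I (Suc i) j \<omega> - p i j \<omega>) / (real i + 1))" for n
  define Z where "Z n = X n - Sq n" for n
  define Xs where "Xs = xs $ j"
  have Xs0: "Xs > 0" unfolding Xs_def by (rule xs_pos)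
  have X0: "X n \<ge> 0" for n unfolding X_def by (rule x_nonneg)
  have X1: "X n \<le> 1" for n unfolding X_def by (rule x_le1)
  have Xrec: "X (Suc n) = X n + (I (Suc n) j \<omega> - X n) / (real n + 1)" for n
    unfolding X_def by (rule x_rec)
  have Srec: "Sq (Suc n) = Sq n + (I (Suc n) j \<omega> - p n j \<omega>) / (real n + 1)" for n
    unfolding Sq_def by simp
  have Zrec: "Z (Suc n) = Z n + (p n j \<omega> - X n) / (real n + 1)" for n
    unfolding Z_def using Z_step[where X=X and S=Sq and n=n, OF Xrec Srec] by simp
  have SqC: "Cauchy Sq" using S Cauchy_convergent_iff unfolding Sq_def by blast
  obtain B where B: "\<And>n. \<bar>Sq n\<bar> \<le> B"
  proof -
    have "Bseq Sq" using convergent_imp_Bseq S unfolding Sq_def by blast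
    then obtain K where "\<forall>n. norm (Sq n) \<le> K" by (auto simp: Bseq_def)
    then show ?thesis using that by auto
  qed
  define b where "b = (1 + a) / 2"
  have b: "0 < b" "b < 1" "a < b" using a a0 unfolding b_def by auto
  define \<beta> where "\<beta> = b powr (1 - \<alpha>)"
  have \<beta>: "0 < \<beta>" "\<beta> < 1" unfolding \<beta>_def using b alpha powr01_less_one[of b "1 - \<alpha>"] by auto
  define th where "th = (1 + \<beta>) / 2"
  define \<gamma> where "\<gamma> = th / \<beta> - 1"
  have \<gamma>: "\<gamma> > 0" unfolding \<gamma>_def th_def using \<beta> by (simp add: field_simps)
  define \<kappa> where "\<kappa> = (1 - th) / 3"
  have th01: "0 < th" "th < 1" unfolding th_def using \<beta> by auto
  have \<kappa>: "0 < \<kappa>" "\<kappa> < 1" unfolding \<kappa>_def using th01 by auto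
  have thk: "(1 - \<kappa>) * ((1 - \<kappa>) / (1 + \<kappa>)) \<ge> th"
  proof -
    have "(1 - \<kappa>) * (1 - \<kappa>) \<ge> (1 - 3 * \<kappa>) * (1 + \<kappa>)" by (simp add: algebra_simps)
    then have "(1 - \<kappa>) * (1 - \<kappa>) / (1 + \<kappa>) \<ge> 1 - 3 * \<kappa>" using \<kappa> by (simp add: pos_le_divide_eq)
    then show ?thesis unfolding \<kappa>_def by (simp add: field_simps)
  qed
  define c0 where "c0 = \<gamma> / ((1 + \<gamma>) * real CARD('m))"
  have c0: "c0 > 0" unfolding c0_def using \<gamma> by simp
  have evE: "eventually (\<lambda>n. 0 \<le> \<epsilon> n \<and> \<epsilon> n \<le> \<kappa>) sequentially"
  proof -
    have "eventually (\<lambda>n. \<epsilon> n < \<kappa>) sequentially" using order_tendstoD(2)[OF eps_lim \<kappa>(1)] .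
    then show ?thesis using eps_ev_pos by eventually_elim auto
  qed
  have evM: "eventually (\<lambda>n. \<forall>l. \<bar>mu_hat \<mu> \<zeta> \<xi> n \<omega> l - \<mu> l\<bar> \<le> \<kappa> * \<mu> l) sequentially"
  proof (rule eventually_all_finite)
    fix l
    have "\<kappa> * \<mu> l > 0" using \<kappa> mu_pos[of l] by simp
    then have "eventually (\<lambda>n. dist (mu_hat \<mu> \<zeta> \<xi> n \<omega> l) (\<mu> l) < \<kappa> * \<mu> l) sequentially"
      using MU[of l] by (simp add: tendsto_iff)
    then show "eventually (\<lambda>n. \<bar>mu_hat \<mu> \<zeta> \<xi> n \<omega> l - \<mu> l\<bar> \<le> \<kappa> * \<mu> l) sequentially"
      by eventually_elim (simp add: dist_real_def)
  qed
  obtain N0 where N0: "\<And>n. n \<ge> N0 \<Longrightarrow> (0 \<le> \<epsilon> n \<and> \<epsilon> n \<le> \<kappa>) \<and> (\<forall>l. \<bar>mu_hat \<mu> \<zeta> \<xi> n \<omega> l - \<mu> l\<bar> \<le> \<kappa> * \<mu> l)"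
    using eventually_conj[OF evE evM] by (auto simp: eventually_sequentially)
  have drift: "p n j \<omega> - X n \<ge> c0 * \<epsilon> n" if n: "n \<ge> N0" and Xb: "X n \<le> b * Xs" for n
  proof -
    have e: "0 \<le> \<epsilon> n" "\<epsilon> n \<le> \<kappa>" using N0[OF n] by auto
    have e1: "\<epsilon> n \<le> 1" using e \<kappa> by simp
    have pl: "p n j \<omega> \<ge> (1 - \<epsilon> n) * ((1 - \<kappa>) / (1 + \<kappa>)) * (Xs powr (1 - \<alpha>) * X n powr \<alpha>)"
      unfolding Xs_def X_def using N0[OF n] \<kappa> e1 by (intro p_lower) auto
    have "(1 - \<epsilon> n) * ((1 - \<kappa>) / (1 + \<kappa>)) \<ge> (1 - \<kappa>) * ((1 - \<kappa>) / (1 + \<kappa>))"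
      using e \<kappa> by (intro mult_right_mono) auto
    then have th_le: "(1 - \<epsilon> n) * ((1 - \<kappa>) / (1 + \<kappa>)) \<ge> th" using thk by linarith
    have db: "Xs powr (1 - \<alpha>) * X n powr \<alpha> \<ge> X n / \<beta>"
      unfolding \<beta>_def by (rule drift_basic[OF X0 Xb b(1,2) Xs0])
    have "p n j \<omega> \<ge> th * (X n / \<beta>)"
    proof -
      have "th * (X n / \<beta>) \<le> (1 - \<epsilon> n) * ((1 - \<kappa>) / (1 + \<kappa>)) * (X n / \<beta>)"
        using th_le X0[of n] \<beta> by (intro mult_right_mono) auto
      also have "\<dots> \<le> (1 - \<epsilon> n) * ((1 - \<kappa>) / (1 + \<kappa>)) * (Xs powr (1 - \<alpha>) * X n powr \<alpha>)"
        using db th_le th01 by (intro mult_left_mono) auto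
      finally show ?thesis using pl by linarith
    qed
    then have pg1: "p n j \<omega> - X n \<ge> \<gamma> * X n" unfolding \<gamma>_def using \<beta> by (simp add: field_simps)
    have pg2: "p n j \<omega> - X n \<ge> \<epsilon> n / real CARD('m) - X n" using p_ge_eps[OF e(1) e1] by simp
    show ?thesis
    proof (cases "X n \<ge> \<epsilon> n / ((1 + \<gamma>) * real CARD('m))")
      case True
      then have "\<gamma> * X n \<ge> \<gamma> * (\<epsilon> n / ((1 + \<gamma>) * real CARD('m)))" using \<gamma> by (intro mult_left_mono) auto
      then show ?thesis using pg1 unfolding c0_def by simp
    next
      case False
      then have "\<epsilon> n / real CARD('m) - X n \<ge> \<epsilon> n / real CARD('m) - \<epsilon> n / ((1 + \<gamma>) * real CARD('m))" by simp
      also have "\<epsilon> n / real CARD('m) - \<epsilon> n / ((1 + \<gamma>) * real CARD('m)) = c0 * \<epsilon> n"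
      proof -
        have m0: "real CARD('m) > 0" by simp
        have nz: "real CARD('m) \<noteq> 0" "(1 + \<gamma>) * real CARD('m) \<noteq> 0"
          "real CARD('m) + \<gamma> * real CARD('m) \<noteq> 0" "1 + \<gamma> \<noteq> 0"
      proof -
        have "\<gamma> * real CARD('m) > 0" using m0 \<gamma> by simp
        then show "real CARD('m) + \<gamma> * real CARD('m) \<noteq> 0" using m0 by linarith
      qed (use m0 \<gamma> in auto)
        show ?thesis unfolding c0_def using nz by (simp add: field_simps)
      qed
      finally show ?thesis using pg2 by linarith
    qed
  qed
  have drift0: "p n j \<omega> - X n \<ge> 0" if "n \<ge> N0" "X n \<le> b * Xs" for n
    using drift[OF that] c0 N0[OF that(1)] by (smt (verit) mult_nonneg_nonneg)
  have Zmono: "Z m' \<le> Z n" if "m' \<le> n" "\<And>k. m' \<le> k \<Longrightarrow> k < n \<Longrightarrow> p k j \<omega> - X k \<ge> 0" for m' n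
    using that
  proof (induction n rule: dec_induct)
    case base then show ?case by simp
  next
    case (step n)
    have "X n \<le> p n j \<omega>" using step by simp
    then have h: "(p n j \<omega> - X n) / (real n + 1) \<ge> 0" by simp
    have "Z m' \<le> Z n" using step by simp
    then show ?case using h Zrec[of n] by simp
  qed
  have partA: "\<exists>n\<ge>N. X n > b * Xs" for N
  proof (rule ccontr)
    assume "\<not> ?thesis"
    then have below: "\<And>n. n \<ge> N \<Longrightarrow> X n \<le> b * Xs" by (simp add: not_less)
    define N1 where "N1 = max N N0"
    have Zgrow: "Z (k + N1) \<ge> Z N1 + c0 * (\<Sum>i<k. \<epsilon> (i + N1) / (real (i + N1) + 1))" for k
    proof (induction k)
      case 0 then show ?case by simp
    next
      case (Suc k)
      have nn: "k + N1 \<ge> N0" "k + N1 \<ge> N" unfolding N1_def by auto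
      have "(p (k + N1) j \<omega> - X (k + N1)) / (real (k + N1) + 1) \<ge> c0 * \<epsilon> (k + N1) / (real (k + N1) + 1)"
        using drift[OF nn(1) below[OF nn(2)]] by (intro divide_right_mono) auto
      then show ?case using Suc Zrec[of "k + N1"] by (simp add: algebra_simps)
    qed
    have Zup: "Z n \<le> 1 + B" for n unfolding Z_def using X1[of n] B[of n] by linarith
    obtain k where k: "(\<Sum>i<k. \<epsilon> (i + N1) / (real (i + N1) + 1)) > (1 + B - Z N1) / c0"
      using eps_div_unbounded[of N1 "(1 + B - Z N1) / c0"] N0 unfolding N1_def by auto
    then have "c0 * (\<Sum>i<k. \<epsilon> (i + N1) / (real (i + N1) + 1)) > 1 + B - Z N1"
      using c0 by (simp add: pos_divide_less_eq mult.commute)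
    then show False using Zgrow[of k] Zup[of "k + N1"] by linarith
  qed
  define \<eta> where "\<eta> = (b - a) * Xs / 2"
  have \<eta>: "\<eta> > 0" unfolding \<eta>_def using b Xs0 by simp
  obtain N2 where N2: "\<And>m n. m \<ge> N2 \<Longrightarrow> n \<ge> N2 \<Longrightarrow> \<bar>Sq m - Sq n\<bar> < \<eta>"
    using SqC \<eta> unfolding Cauchy_def dist_real_def by metis
  obtain N3 :: nat where N3: "1 / \<eta> < real N3" using reals_Archimedean2 by blast
  define N4 where "N4 = max N0 (max N2 N3)"
  obtain n1 where n1: "n1 \<ge> N4" "X n1 > b * Xs" using partA by blast
  have "\<forall>n\<ge>n1. X n \<ge> a * Xs"
  proof (intro allI impI)
    fix n assume nn1: "n \<ge> n1"
    define K where "K = {k. n1 \<le> k \<and> k \<le> n \<and> X k > b * Xs}"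
    have Kfin: "finite K" unfolding K_def by (rule finite_subset[of _ "{..n}"]) auto
    have Kne: "n1 \<in> K" unfolding K_def using nn1 n1 by simp
    define m where "m = Max K"
    have mK: "m \<in> K" unfolding m_def using Kfin Kne by (intro Max_in) auto
    have mmax: "k \<in> K \<Longrightarrow> k \<le> m" for k unfolding m_def using Kfin by simp
    have m: "n1 \<le> m" "m \<le> n" "X m > b * Xs" using mK unfolding K_def by auto
    show "X n \<ge> a * Xs"
    proof (cases "m = n")
      case True then show ?thesis using m b Xs0 by (smt (verit) mult_right_mono)
    next
      case False
      then have mn: "Suc m \<le> n" using m by simp
      have after: "X k \<le> b * Xs" if "Suc m \<le> k" "k \<le> n" for k
      proof (rule ccontr)
        assume "\<not> X k \<le> b * Xs"
        then have "k \<in> K" unfolding K_def using that m by auto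
        then show False using mmax that by fastforce
      qed
      have "Z (Suc m) \<le> Z n"
      proof (rule Zmono[OF mn])
        fix k assume "Suc m \<le> k" "k < n"
        moreover have "k \<ge> N0" using calculation m n1 unfolding N4_def by simp
        ultimately show "p k j \<omega> - X k \<ge> 0" using drift0 after by simp
      qed
      then have z: "X n \<ge> X (Suc m) + (Sq n - Sq (Suc m))" unfolding Z_def by simp
      have sq: "\<bar>Sq n - Sq (Suc m)\<bar> < \<eta>" using N2[of n "Suc m"] m n1 mn unfolding N4_def by simp
      have xm: "X (Suc m) \<ge> X m - 1 / (real m + 1)"
      proof -
        have "X (Suc m) = X m + (I (Suc m) j \<omega> - X m) / (real m + 1)" by (rule Xrec)
        moreover have "(I (Suc m) j \<omega> - X m) / (real m + 1) \<ge> - 1 / (real m + 1)"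
          using X1[of m] by (intro divide_right_mono) (auto simp: I_def)
        ultimately show ?thesis by simp
      qed
      have "1 / (real m + 1) \<le> \<eta>"
      proof -
        have "real N3 \<le> real m + 1" using m n1 unfolding N4_def by simp
        then have "1 / \<eta> < real m + 1" using N3 by linarith
        then show ?thesis using \<eta> by (simp add: field_simps)
      qed
      then have "X n > b * Xs - 2 * \<eta>" using z sq xm m by linarith
      moreover have "b * Xs - 2 * \<eta> = a * Xs" unfolding \<eta>_def by (simp add: field_simps)
      ultimately show ?thesis by simp
    qed
  qed
  then show ?thesis unfolding X_def Xs_def eventually_sequentially by blast
qed

end


context setting
begin

lemma x_conv_path:
  assumes S: "\<And>j. convergent (\<lambda>n. \<Sum>i<n. (I (Suc i) j \<omega> - p i j \<omega>) / (real i + 1))"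
    and MU: "\<And>l. (\<lambda>n. mu_hat \<mu> \<zeta> \<xi> n \<omega> l) \<longlonglongrightarrow> \<mu> l"
  shows "(\<lambda>n. x_proc \<xi> n \<omega>) \<longlonglongrightarrow> xs"
proof (rule vec_tendstoI)
  fix j
  show "(\<lambda>n. x_proc \<xi> n \<omega> $ j) \<longlonglongrightarrow> xs $ j"
  proof (rule LIMSEQ_I)
    fix e :: real assume e: "e > 0"
    define a where "a = 1 - e / 2"
    have a1: "a < 1" unfolding a_def using e by simp
    have ev: "eventually (\<lambda>n. \<forall>l. x_proc \<xi> n \<omega> $ l \<ge> a * xs $ l) sequentially"
      by (rule eventually_all_finite) (rule liminf_lower[OF S MU a1])
    then obtain N where N: "\<And>n l. n \<ge> N \<Longrightarrow> x_proc \<xi> n \<omega> $ l \<ge> a * xs $ l"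
      by (auto simp: eventually_sequentially)
    have xs1: "(\<Sum>l\<in>UNIV. xs $ l) = 1" using xs_simplex by (simp add: unit_simplex_def)
    have xsle: "xs $ j \<le> 1"
    proof -
      have "xs $ j \<le> (\<Sum>l\<in>UNIV. xs $ l)" by (rule member_le_sum) (use xs_pos less_imp_le in auto)
      then show ?thesis using xs1 by simp
    qed
    show "\<exists>no. \<forall>n\<ge>no. norm (x_proc \<xi> n \<omega> $ j - xs $ j) < e"
    proof (intro exI allI impI)
      fix n assume n: "n \<ge> N"
      define x where "x = x_proc \<xi> n \<omega>"
      have x1: "(\<Sum>l\<in>UNIV. x $ l) = 1" using x_simplex[of n \<omega>] by (simp add: unit_simplex_def x_def)
      have lo: "x $ j \<ge> a * xs $ j" using N[OF n] unfolding x_def by simp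
      have sx: "(\<Sum>l\<in>UNIV - {j}. x $ l) = 1 - x $ j" using x1 sum.remove[of UNIV j "\<lambda>l. x $ l"] by simp
      have sxs: "(\<Sum>l\<in>UNIV - {j}. xs $ l) = 1 - xs $ j" using xs1 sum.remove[of UNIV j "\<lambda>l. xs $ l"] by simp
      have "(\<Sum>l\<in>UNIV - {j}. x $ l) \<ge> (\<Sum>l\<in>UNIV - {j}. a * xs $ l)"
        by (intro sum_mono) (use N[OF n] in \<open>auto simp: x_def\<close>)
      then have hi: "1 - x $ j \<ge> a * (1 - xs $ j)" using sx sxs by (simp add: sum_distrib_left[symmetric])
      have l1: "x $ j - xs $ j \<ge> - (e / 2) * xs $ j" using lo unfolding a_def by (simp add: algebra_simps)
      have l2: "- (e / 2) * xs $ j \<ge> - (e / 2)" using xsle e by simp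
      have u1: "x $ j - xs $ j \<le> (e / 2) * (1 - xs $ j)" using hi unfolding a_def by (simp add: algebra_simps)
      have u2: "(e / 2) * (1 - xs $ j) \<le> e / 2" using xs_pos[of j] e by (simp add: mult_left_le)
      have "\<bar>x $ j - xs $ j\<bar> \<le> e / 2" using l1 l2 u1 u2 by linarith
      then show "norm (x_proc \<xi> n \<omega> $ j - xs $ j) < e" using e unfolding x_def by simp
    qed
  qed
qed

lemma x_conv_AE: "AE \<omega> in M. (\<lambda>n. x_proc \<xi> n \<omega>) \<longlonglongrightarrow> xs"
proof -
  have A: "AE \<omega> in M. \<forall>j\<in>UNIV. convergent (\<lambda>n. \<Sum>i<n. (I (Suc i) j \<omega> - p i j \<omega>) / (real i + 1))"
    by (rule AE_finite_allI) (auto intro: S_conv)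
  have B: "AE \<omega> in M. \<forall>j\<in>UNIV. convergent (\<lambda>n. \<Sum>i<n. hN j i \<omega> * \<zeta> j (Suc i) \<omega>)"
    by (rule AE_finite_allI) (auto intro: T_conv)
  show ?thesis using A B
  proof eventually_elim
    case (elim \<omega>)
    show ?case by (rule x_conv_path) (use elim muhat_conv in auto)
  qed
qed

end

theorem mainTheorem11:
  fixes M :: "'a measure"
    and \<mu> :: "'m::finite \<Rightarrow> real"
    and \<alpha> :: real
    and \<zeta> :: "'m \<Rightarrow> nat \<Rightarrow> 'a \<Rightarrow> real"
    and \<xi> :: "nat \<Rightarrow> 'a \<Rightarrow> 'm"
    and \<epsilon> c :: "nat \<Rightarrow> real"
  assumes m_gt1: "CARD('m) > 1"
    and mu_pos: "\<And>i. \<mu> i > 0"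
    and alpha: "0 < \<alpha>" "\<alpha> < 1"
    and P: "prob_space M"
    and xi_meas: "\<And>n. \<xi> n \<in> measurable M (count_space UNIV)"
    and zeta_meas: "\<And>i n. \<zeta> i n \<in> borel_measurable M"
    and zeta_mean: "\<And>i n. integrable M (\<zeta> i n) \<and> integral\<^sup>L M (\<zeta> i n) = 0"
    and zeta_var: "\<And>i n. integrable M (\<lambda>\<omega>. (\<zeta> i n \<omega>)\<^sup>2)"
    and zeta_iid: "\<And>i. prob_space.indep_vars M (\<lambda>_. borel) (\<zeta> i) UNIV
                       \<and> (\<forall>n. distr M borel (\<zeta> i n) = distr M borel (\<zeta> i 0))"
    and zeta_indep_past: "\<And>n. prob_space.indep_set M
              (past_and_choice M \<xi> \<zeta> n) (noise_events M \<zeta> (Suc n))"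
    and eps0: "0 < \<epsilon> 0" "\<epsilon> 0 \<le> 1"
    and eps_rec: "\<And>n. \<epsilon> (Suc n) = (1 - c n) * \<epsilon> n"
    and c_pos: "\<And>n. 0 < c n"
    and c_dec: "decseq c"
    and c_lim: "c \<longlonglongrightarrow> 0"
    and c_nsum: "\<not> summable c"
    and nc_lim: "(\<lambda>n. real n * c n) \<longlonglongrightarrow> 0"
    and eps_m_nsum: "\<not> summable (\<lambda>n. \<epsilon> n ^ CARD('m))"
    and eps_n_nsum: "\<not> summable (\<lambda>n. \<epsilon> n / (real n + 1))"
    and sqrt_eps: "filterlim (\<lambda>n. sqrt (real n) * \<epsilon> n) at_top sequentially"
    and selection: "\<And>n j A. A \<in> past_events M \<xi> \<zeta> n \<Longrightarrow>
          measure M (A \<inter> {\<omega> \<in> space M. \<xi> (Suc n) \<omega> = j})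
          = (\<integral>\<omega>. indicator A \<omega> * sel_prob \<alpha> \<mu> \<zeta> \<xi> \<epsilon> n \<omega> j \<partial>M)"
  shows "strict_concave_on unit_simplex (psi \<mu> \<alpha>)
         \<and> (let xs = (\<chi> i. \<mu> i powr (\<alpha> / (1 - \<alpha>)) / (\<Sum>k\<in>UNIV. \<mu> k powr (\<alpha> / (1 - \<alpha>))))
            in xs \<in> unit_simplex
               \<and> (\<forall>y\<in>unit_simplex. y \<noteq> xs \<longrightarrow> psi \<mu> \<alpha> y < psi \<mu> \<alpha> xs)
               \<and> (AE \<omega> in M. (\<lambda>n. x_proc \<xi> n \<omega>) \<longlonglongrightarrow> xs))"
proof -
  have st: "setting M \<mu> \<alpha> \<zeta> \<xi> \<epsilon> c"
    by (rule setting.intro[OF P setting_axioms.intro])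
       (fact m_gt1 mu_pos alpha xi_meas zeta_meas zeta_mean zeta_var zeta_iid zeta_indep_past
          eps0 eps_rec c_pos c_dec c_lim c_nsum eps_n_nsum sqrt_eps selection)+
  have xe: "(\<chi> i. \<mu> i powr (\<alpha> / (1 - \<alpha>)) / (\<Sum>k\<in>UNIV. \<mu> k powr (\<alpha> / (1 - \<alpha>)))) = xstar \<mu> \<alpha>"
    unfolding xstar_def ..
  have 1: "strict_concave_on unit_simplex (psi \<mu> \<alpha>)" by (rule psi_strict_concave[OF mu_pos alpha])
  have 2: "xstar \<mu> \<alpha> \<in> unit_simplex" by (rule xstar_simplex[OF mu_pos alpha])
  have 3: "\<forall>y\<in>unit_simplex. y \<noteq> xstar \<mu> \<alpha> \<longrightarrow> psi \<mu> \<alpha> y < psi \<mu> \<alpha> (xstar \<mu> \<alpha>)"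
    using psi_max[where \<mu>=\<mu> and a=\<alpha>, OF mu_pos alpha] by blast
  have 4: "AE \<omega> in M. (\<lambda>n. x_proc \<xi> n \<omega>) \<longlonglongrightarrow> xstar \<mu> \<alpha>"
    by (rule setting.x_conv_AE[OF st])
  show ?thesis unfolding Let_def xe by (intro conjI 1 2 3 4)
qed



end
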